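(* Let $\mathcal{A}_i\subseteq[K]$ for $i\in[M]$, $\mathcal{R}_a=\{i\in[M]:a\in\mathcal{A}_i\}$, and let $e_{i,a}\in\mathbb{R}^d$ be unit vectors. Let $\mathcal{C}$ be the set of $\pi=(\pi_{i,a})_{i\in[M],a\in\mathcal{A}_i}$ with $\pi_{i,a}\ge0$, $\sum_{a\in\mathcal{A}_i}\pi_{i,a}=1$ for all $i$, and $\mathrm{rank}(\{\pi_{i,a}e_{i,a}\}_{i\in\mathcal{R}_a})=\mathrm{rank}(\{e_{i,a}\}_{i\in\mathcal{R}_a})$ for all $a$ with $\mathcal{R}_a\neq\emptyset$. Define $F(\pi)=\sum_{a\in[K]}\log\mathrm{Det}\big(\sum_{j\in\mathcal{R}_a}\pi_{j,a}e_{j,a}e_{j,a}^\intercal\big)$, $G(\pi)=\sum_{i=1}^M\max_{a\in\mathcal{A}_i}e_{i,a}^\intercal\big(\sum_{j\in\mathcal{R}_a}\pi_{j,a}e_{j,a}e_{j,a}^\intercal\big)^\dagger e_{i,a}$, and $d_a=\mathrm{rank}(\{e_{i,a}\}_{i\in\mathcal{R}_a})$. For $\pi^*\in\mathcal{C}$ the following are equivalent: (1) $\pi^*$ maximizes $F$ over $\mathcal{C}$; (2) $\pi^*$ minimizes $G$ over $\mathcal{C}$; (3) $G(\pi^* )=\sum_{a\in[K]}d_a$.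
   Context: $A^\dagger$ denotes the Moore–Penrose pseudo-inverse. For a square matrix $A\in\mathbb{R}^{n\times n}$, the pseudo-determinant is $\mathrm{Det}(A)=\lim_{\epsilon\to0}\det(A+\epsilon I)/\epsilon^{n-\mathrm{rank}(A)}$ (the product of the nonzero eigenvalues). *)

theory Defs
  imports "HOL-Analysis.Analysis"
begin

definition outer :: "real^'d \<Rightarrow> real^'d^'d" where
  "outer v = (\<chi> r c. v $ r * v $ c)"

definition mp_pinv :: "real^'n^'m \<Rightarrow> real^'m^'n" where
  "mp_pinv A = (THE B. A ** B ** A = A \<and> B ** A ** B = B \<and>
                      transpose (A ** B) = A ** B \<and> transpose (B ** A) = B ** A)"

definition pdet :: "real^'n^'n \<Rightarrow> real" where
  "pdet A = Lim (at (0::real))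
     (\<lambda>\<epsilon>. det (A + \<epsilon> *\<^sub>R mat 1) / \<epsilon> ^ (CARD('n) - rank A))"

definition Rset :: "nat \<Rightarrow> (nat \<Rightarrow> nat set) \<Rightarrow> nat \<Rightarrow> nat set" where
  "Rset M A a = {i \<in> {1..M}. a \<in> A i}"

definition Vmat :: "nat \<Rightarrow> (nat \<Rightarrow> nat set) \<Rightarrow> (nat \<Rightarrow> nat \<Rightarrow> real^'d)
     \<Rightarrow> (nat \<Rightarrow> nat \<Rightarrow> real) \<Rightarrow> nat \<Rightarrow> real^'d^'d" where
  "Vmat M A e \<pi> a = (\<Sum>j\<in>Rset M A a. \<pi> j a *\<^sub>R outer (e j a))"

definition Cset :: "nat \<Rightarrow> nat \<Rightarrow> (nat \<Rightarrow> nat set) \<Rightarrow> (nat \<Rightarrow> nat \<Rightarrow> real^'d)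
     \<Rightarrow> (nat \<Rightarrow> nat \<Rightarrow> real) set" where
  "Cset M K A e = {\<pi>.
     (\<forall>i\<in>{1..M}. (\<forall>a\<in>A i. \<pi> i a \<ge> 0) \<and> (\<Sum>a\<in>A i. \<pi> i a) = 1) \<and>
     (\<forall>a\<in>{1..K}. Rset M A a \<noteq> {} \<longrightarrow>
        dim ((\<lambda>i. \<pi> i a *\<^sub>R e i a) ` Rset M A a) = dim ((\<lambda>i. e i a) ` Rset M A a))}"

definition Fobj :: "nat \<Rightarrow> nat \<Rightarrow> (nat \<Rightarrow> nat set) \<Rightarrow> (nat \<Rightarrow> nat \<Rightarrow> real^'d)
     \<Rightarrow> (nat \<Rightarrow> nat \<Rightarrow> real) \<Rightarrow> real" where
  "Fobj M K A e \<pi> = (\<Sum>a\<in>{1..K}. ln (pdet (Vmat M A e \<pi> a)))"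

definition Gobj :: "nat \<Rightarrow> (nat \<Rightarrow> nat set) \<Rightarrow> (nat \<Rightarrow> nat \<Rightarrow> real^'d)
     \<Rightarrow> (nat \<Rightarrow> nat \<Rightarrow> real) \<Rightarrow> real" where
  "Gobj M A e \<pi> = (\<Sum>i\<in>{1..M}.
      Max ((\<lambda>a. e i a \<bullet> (mp_pinv (Vmat M A e \<pi> a) *v e i a)) ` A i))"

definition dval :: "nat \<Rightarrow> (nat \<Rightarrow> nat set) \<Rightarrow> (nat \<Rightarrow> nat \<Rightarrow> real^'d) \<Rightarrow> nat \<Rightarrow> nat" where
  "dval M A e a = dim ((\<lambda>i. e i a) ` Rset M A a)"

end

theory Submission
  imports Defs
begin



lemma outer_mult: "outer v *v x = (v \<bullet> x) *\<^sub>R v"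
  by (simp add: outer_def matrix_vector_mult_def inner_vec_def vec_eq_iff sum_distrib_left mult_ac)

lemma outer_entry: "outer v $ i $ j = v $ i * v $ j"
  by (simp add: outer_def)

definition dg :: "(real^'n) set \<Rightarrow> (real^'n \<Rightarrow> real) \<Rightarrow> real^'n^'n" where
  "dg B f = (\<Sum>b\<in>B. f b *\<^sub>R outer b)"

definition onb :: "(real^'n) set \<Rightarrow> bool" where
  "onb B \<longleftrightarrow> pairwise orthogonal B \<and> (\<forall>b\<in>B. norm b = 1) \<and> span B = UNIV"

lemma onb_indep: "onb B \<Longrightarrow> independent B"
  unfolding onb_def
  by (metis norm_zero pairwise_orthogonal_independent zero_neq_one)

lemma onb_finite: "onb B \<Longrightarrow> finite B"
  using onb_indep independent_imp_finite by blast

lemma onb_card: "onb B \<Longrightarrow> card B = CARD('n)" for B :: "(real^'n) set"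
proof -
  assume B: "onb B"
  have "card B = dim B" using onb_indep[OF B] by (simp add: dim_eq_card_independent)
  also have "\<dots> = dim (span B)" by simp
  also have "\<dots> = dim (UNIV :: (real^'n) set)" using B by (simp add: onb_def)
  finally show ?thesis by simp
qed

lemma onb_inner: "onb B \<Longrightarrow> b \<in> B \<Longrightarrow> c \<in> B \<Longrightarrow> b \<bullet> c = (if b = c then 1 else 0)"
  unfolding onb_def pairwise_def orthogonal_def
  by (metis norm_eq_1 power2_norm_eq_inner)

lemma onb_expand: "onb B \<Longrightarrow> (\<Sum>b\<in>B. (b \<bullet> x) *\<^sub>R b) = x"
  using orthonormal_basis_expand[of B x] onb_finite[of B]
  unfolding onb_def by (simp add: inner_commute)

lemma sum_matrix_vec: "(\<Sum>b\<in>B. M b) *v x = (\<Sum>b\<in>B. M b *v x)"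
  by (induction B rule: infinite_finite_induct) (auto simp: matrix_vector_mult_add_rdistrib)

lemma dg_vec: "dg B f *v x = (\<Sum>b\<in>B. (f b * (b \<bullet> x)) *\<^sub>R b)"
  unfolding dg_def sum_matrix_vec
  by (rule sum.cong) (simp_all add: vec_eq_iff matrix_vector_mult_def outer_def inner_vec_def sum_distrib_left mult_ac)

lemma inner_sum_onb:
  assumes "onb B" "c \<in> B"
  shows "c \<bullet> (\<Sum>b\<in>B. h b *\<^sub>R b) = h c"
proof -
  have "c \<bullet> (\<Sum>b\<in>B. h b *\<^sub>R b) = (\<Sum>b\<in>B. h b * (c \<bullet> b))"
    by (simp add: inner_sum_right)
  also have "\<dots> = (\<Sum>b\<in>B. if b = c then h b else 0)"
    by (rule sum.cong) (auto simp: onb_inner[OF assms(1) assms(2)])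
  also have "\<dots> = h c" using assms onb_finite[OF assms(1)] by (simp add: sum.delta)
  finally show ?thesis .
qed

lemma inner_dg: "onb B \<Longrightarrow> c \<in> B \<Longrightarrow> c \<bullet> (dg B f *v x) = f c * (c \<bullet> x)"
  by (simp add: dg_vec inner_sum_onb)

lemma dg_vec_b: "onb B \<Longrightarrow> c \<in> B \<Longrightarrow> dg B f *v c = f c *\<^sub>R c"
proof -
  assume B: "onb B" and c: "c \<in> B"
  have "dg B f *v c = (\<Sum>b\<in>B. (if b = c then f c else 0) *\<^sub>R b)"
    unfolding dg_vec by (rule sum.cong) (auto simp: onb_inner[OF B _ c])
  also have "\<dots> = f c *\<^sub>R c" using c onb_finite[OF B]
    by (simp add: if_distrib[of "\<lambda>x. x *\<^sub>R _"] sum.delta' cong: if_cong)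
  finally show ?thesis .
qed

lemma dg_mult: "onb B \<Longrightarrow> dg B f ** dg B g = dg B (\<lambda>b. f b * g b)"
  unfolding matrix_eq
proof
  fix x assume B: "onb B"
  show "(dg B f ** dg B g) *v x = dg B (\<lambda>b. f b * g b) *v x"
    unfolding matrix_vector_mul_assoc[symmetric]
    by (subst (1) dg_vec, subst dg_vec) (simp add: inner_dg[OF B] mult_ac cong: sum.cong)
qed

lemma dg_one: "onb B \<Longrightarrow> dg B (\<lambda>_. 1) = mat 1"
  unfolding matrix_eq by (simp add: dg_vec onb_expand)

lemma dg_add: "dg B f + dg B g = dg B (\<lambda>b. f b + g b)"
  unfolding dg_def by (simp add: sum.distrib scaleR_add_left)

lemma dg_diff: "dg B f - dg B g = dg B (\<lambda>b. f b - g b)"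
  unfolding dg_def by (simp add: sum_subtractf scaleR_diff_left)

lemma dg_scale: "c *\<^sub>R dg B f = dg B (\<lambda>b. c * f b)"
  unfolding dg_def by (simp add: scaleR_sum_right)

lemma dg_zero: "dg B (\<lambda>_. 0) = 0"
  unfolding dg_def by simp

lemma dg_cong: "(\<And>b. b \<in> B \<Longrightarrow> f b = g b) \<Longrightarrow> dg B f = dg B g"
  unfolding dg_def by (simp cong: sum.cong)

lemma dg_entry: "dg B f $ i $ j = (\<Sum>b\<in>B. f b * (b $ i * b $ j))"
  unfolding dg_def by (simp add: outer_entry sum_component)

lemma dg_transpose: "transpose (dg B f) = dg B f"
  by (simp add: transpose_def dg_entry vec_eq_iff mult_ac)

lemma trace_outer_mult: "trace (M ** outer v) = v \<bullet> (M *v v)"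
  by (simp add: trace_def matrix_matrix_mult_def outer_entry inner_vec_def matrix_vector_mult_def
      sum_distrib_left mult_ac)

lemma trace_sum: "trace (\<Sum>b\<in>B. M b) = (\<Sum>b\<in>B. trace (M b))"
  unfolding trace_def by (simp add: sum_component) (rule sum.swap)

lemma trace_scaleR: "trace (c *\<^sub>R M) = c * trace M"
  by (simp add: trace_def sum_distrib_left)

lemma trace_dg: "onb B \<Longrightarrow> trace (dg B f) = sum f B"
proof -
  assume B: "onb B"
  have "trace (dg B f) = (\<Sum>b\<in>B. f b * (b \<bullet> b))"
    unfolding dg_def trace_sum trace_scaleR
    by (simp add: trace_def outer_entry inner_vec_def)
  also have "\<dots> = sum f B" using onb_inner[OF B] by simp
  finally show ?thesis .
qed




lemma det_dg:
  fixes B :: "(real^'n) set"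
  assumes B: "onb B"
  shows "det (dg B f) = prod f B"
proof -
  have fin: "finite B" using onb_finite[OF B] .
  have "card (UNIV::'n set) = card B" using onb_card[OF B] by simp
  then obtain g :: "'n \<Rightarrow> real^'n" where g: "bij_betw g UNIV B"
    using finite_same_card_bij[OF finite_class.finite_UNIV fin] by blast
  have gin: "g i \<in> B" for i using g by (auto simp: bij_betw_def)
  have ginj: "g i = g j \<longleftrightarrow> i = j" for i j using g by (auto simp: bij_betw_def inj_def)
  define U :: "real^'n^'n" where "U = (\<chi> r j. g j $ r)"
  have Ue: "U $ r $ j = g j $ r" for r j by (simp add: U_def)
  define D :: "real^'n^'n" where "D = (\<chi> i j. if i = j then f (g i) else 0)"
  have eq: "dg B f = U ** D ** transpose U"
  proof -
    have "(U ** D ** transpose U) $ r $ c = dg B f $ r $ c" for r c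
    proof -
      have UD: "(U ** D) $ r $ k = g k $ r * f (g k)" for k
      proof -
        have "(U ** D) $ r $ k = (\<Sum>j\<in>UNIV. g j $ r * (if j = k then f (g j) else 0))"
          by (simp add: matrix_matrix_mult_def U_def D_def)
        also have "\<dots> = (\<Sum>j\<in>UNIV. if j = k then g k $ r * f (g k) else 0)"
          by (rule sum.cong) auto
        finally show ?thesis by simp
      qed
      have "(U ** D ** transpose U) $ r $ c = (\<Sum>k\<in>UNIV. f (g k) * (g k $ r * g k $ c))"
        unfolding matrix_matrix_mult_def[of "U ** D"] by (simp add: UD transpose_def Ue mult_ac)
      also have "\<dots> = (\<Sum>b\<in>B. f b * (b $ r * b $ c))"
        using sum.reindex_bij_betw[OF g, of "\<lambda>b. f b * (b $ r * b $ c)"] by simp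
      finally show ?thesis by (simp add: dg_entry)
    qed
    then show ?thesis by (simp add: vec_eq_iff)
  qed
  have UU: "transpose U ** U = mat 1"
  proof -
    have "(transpose U ** U) $ i $ j = (if i = j then 1 else 0)" for i j
    proof -
      have "(transpose U ** U) $ i $ j = g i \<bullet> g j"
        by (simp add: matrix_matrix_mult_def U_def transpose_def inner_vec_def)
      also have "\<dots> = (if i = j then 1 else 0)" using onb_inner[OF B gin gin] ginj by simp
      finally show ?thesis .
    qed
    then show ?thesis by (simp add: vec_eq_iff mat_def)
  qed
  have dU: "det U * det U = 1"
    using arg_cong[OF UU, of det] by (simp add: det_mul)
  have dD: "det D = prod f B"
  proof -
    have "det D = (\<Prod>i\<in>UNIV. f (g i))"
      by (subst det_diagonal) (auto simp: D_def)
    also have "\<dots> = prod f B" using prod.reindex_bij_betw[OF g, of f] by simp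
    finally show ?thesis .
  qed
  have "det U * prod f B * det U = prod f B * (det U * det U)" by (simp add: mult_ac)
  then show ?thesis unfolding eq det_mul det_transpose dD dU by simp
qed

lemma sym_inner:
  fixes S :: "real^'n^'n"
  assumes h: "transpose S = S" shows "x \<bullet> (S *v y) = (S *v x) \<bullet> y"
proof -
  have "x v* S = S *v x" using vector_transpose_matrix[of x S] h by simp
  then show ?thesis using dot_lmul_matrix[of x S y] by simp
qed

lemma onb_ext:
  assumes B: "onb B" and h: "\<And>c. c \<in> B \<Longrightarrow> c \<bullet> x = c \<bullet> y" shows "x = y"
proof -
  have "x = (\<Sum>b\<in>B. (b \<bullet> x) *\<^sub>R b)" using onb_expand[OF B] by simp
  also have "\<dots> = (\<Sum>b\<in>B. (b \<bullet> y) *\<^sub>R b)" by (intro sum.cong) (auto simp: h)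
  also have "\<dots> = y" using onb_expand[OF B] by simp
  finally show ?thesis .
qed

lemma cont_mv: "continuous_on X (\<lambda>x. (S::real^'n^'m) *v x)"
  by (simp add: linear_continuous_on)

lemma spectral_aux:
  fixes S :: "real^'n^'n"
  assumes sym: "transpose S = S"
  shows "subspace U \<Longrightarrow> (\<forall>x\<in>U. S *v x \<in> U) \<Longrightarrow> \<exists>B. B \<subseteq> U \<and> pairwise orthogonal B \<and>
     (\<forall>b\<in>B. norm b = 1) \<and> span B = U \<and> (\<forall>b\<in>B. S *v b = (b \<bullet> (S *v b)) *\<^sub>R b)"
proof (induction "dim U" arbitrary: U rule: less_induct)
  case less
  note sub = less.prems(1) and inv = less.prems(2)
  show ?case
  proof (cases "U = {0}")
    case True
    then show ?thesis by (intro exI[of _ "{}"]) auto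
  next
    case False
    then obtain u where u: "u \<in> U" "u \<noteq> 0" using sub subspace_0 by blast
    define T where "T = U \<inter> sphere 0 1"
    have cT: "compact T" unfolding T_def
      by (intro closed_Int_compact closed_subspace sub compact_sphere)
    have "(1 / norm u) *\<^sub>R u \<in> T" using u sub unfolding T_def
      by (auto simp: subspace_scale)
    then have neT: "T \<noteq> {}" by blast
    define q where "q x = x \<bullet> (S *v x)" for x
    have cq: "continuous_on T q" unfolding q_def
      by (intro continuous_intros cont_mv)
    obtain v where vT: "v \<in> T" and vmax: "\<And>y. y \<in> T \<Longrightarrow> q y \<le> q v"
      using continuous_attains_sup[OF cT neT cq] by blast
    have vU: "v \<in> U" and nv: "norm v = 1" using vT by (auto simp: T_def)
    have vv: "v \<bullet> v = 1" using nv by (simp add: norm_eq_1)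
    define lam where "lam = q v"
    define w where "w = S *v v - lam *\<^sub>R v"
    have wU: "w \<in> U" unfolding w_def using inv vU sub by (simp add: subspace_diff subspace_scale)
    have wv: "w \<bullet> v = 0"
    proof -
      have "w \<bullet> v = (S *v v) \<bullet> v - lam * (v \<bullet> v)" by (simp add: w_def inner_diff_left)
      also have "\<dots> = 0" by (simp add: vv lam_def q_def inner_commute)
      finally show ?thesis .
    qed
    have vw: "v \<bullet> w = 0" using wv by (simp add: inner_commute)
    have wSv: "w \<bullet> (S *v v) = w \<bullet> w"
    proof -
      have "S *v v = w + lam *\<^sub>R v" by (simp add: w_def)
      then show ?thesis by (simp add: inner_add_right wv)
    qed
    have key: "2 * t * (w \<bullet> w) \<le> t\<^sup>2 * (lam * (w \<bullet> w) - q w)" for t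
    proof -
      define z where "z = v + t *\<^sub>R w"
      have zz: "z \<bullet> z = 1 + t\<^sup>2 * (w \<bullet> w)"
        by (simp add: z_def inner_add_left inner_add_right vv wv vw power2_eq_square)
      have zpos: "z \<bullet> z > 0" using zz by (simp add: add_pos_nonneg)
      then have nz: "norm z > 0" by (simp add: inner_gt_zero_iff)
      have zU: "z \<in> U" unfolding z_def using vU wU sub by (simp add: subspace_add subspace_scale)
      have "(1 / norm z) *\<^sub>R z \<in> T" using zU nz sub unfolding T_def
        by (auto simp: subspace_scale)
      then have "q ((1 / norm z) *\<^sub>R z) \<le> lam" using vmax lam_def by blast
      moreover have "q ((1 / norm z) *\<^sub>R z) = q z / (z \<bullet> z)"
      proof -
        have "q ((1 / norm z) *\<^sub>R z) = (1 / norm z)\<^sup>2 * q z"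
          unfolding q_def by (simp add: matrix_vector_mult_scaleR power2_eq_square)
        also have "(1 / norm z)\<^sup>2 = 1 / (z \<bullet> z)" by (simp add: power_one_over power2_norm_eq_inner)
        finally show ?thesis by simp
      qed
      ultimately have "q z \<le> lam * (z \<bullet> z)" using zpos by (simp add: divide_le_eq mult.commute)
      moreover have "q z = lam + 2 * t * (w \<bullet> w) + t\<^sup>2 * q w"
      proof -
        have "v \<bullet> (S *v w) = w \<bullet> (S *v v)" using sym_inner[OF sym, of v w] by (simp add: inner_commute)
        then show ?thesis unfolding z_def q_def lam_def
          by (simp add: matrix_vector_right_distrib inner_add_left inner_add_right
              matrix_vector_mult_scaleR wSv power2_eq_square algebra_simps)
      qed
      ultimately show ?thesis unfolding zz by (simp add: algebra_simps)
    qed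
    have w0: "w = 0"
    proof (rule ccontr)
      assume "w \<noteq> 0"
      then have wp: "w \<bullet> w > 0" by simp
      define c where "c = lam * (w \<bullet> w) - q w"
      define t where "t = (w \<bullet> w) / (\<bar>c\<bar> + 1)"
      have tp: "t > 0" using wp by (simp add: t_def)
      have "2 * t * (w \<bullet> w) \<le> t * t * c" using key[of t] by (simp add: c_def power2_eq_square)
      then have "2 * (w \<bullet> w) \<le> t * c" using tp by (simp add: mult.assoc)
      also have "\<dots> \<le> t * \<bar>c\<bar>" using tp by (simp add: mult_left_mono)
      also have "\<dots> < w \<bullet> w" unfolding t_def using wp
        by (simp add: divide_less_eq mult_strict_left_mono)
      finally show False using wp by simp
    qed
    have Sv: "S *v v = lam *\<^sub>R v" using w0 by (simp add: w_def)
    define U' where "U' = {x \<in> U. x \<bullet> v = 0}"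
    have sub': "subspace U'" unfolding U'_def subspace_def using sub
      by (auto simp: subspace_def inner_add_left)
    have inv': "\<forall>x\<in>U'. S *v x \<in> U'"
    proof
      fix x assume x: "x \<in> U'"
      have "(S *v x) \<bullet> v = x \<bullet> (S *v v)" using sym_inner[OF sym, of x v] by simp
      also have "\<dots> = 0" using x by (simp add: Sv U'_def)
      finally show "S *v x \<in> U'" using x inv by (simp add: U'_def)
    qed
    have "U' \<subseteq> U" by (auto simp: U'_def)
    moreover have "v \<in> U - U'" using vU vv by (simp add: U'_def)
    ultimately have ps: "U' \<subset> U" by blast
    have e1: "span U = U" using sub by (simp add: span_eq_iff)
    have e2: "span U' = U'" using sub' by (simp add: span_eq_iff)
    have "span U' \<subset> span U" unfolding e1 e2 by (rule ps)
    then have "dim U' < dim U" by (rule dim_psubset)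
    then obtain B' where B': "B' \<subseteq> U'" "pairwise orthogonal B'" "\<forall>b\<in>B'. norm b = 1" "span B' = U'"
      "\<forall>b\<in>B'. S *v b = (b \<bullet> (S *v b)) *\<^sub>R b"
      using less.hyps[OF _ sub' inv'] by blast
    show ?thesis
    proof (intro exI[of _ "insert v B'"] conjI)
      show "insert v B' \<subseteq> U" using B'(1) vU by (auto simp: U'_def)
      show "pairwise orthogonal (insert v B')" using B'(1,2)
        by (auto simp: pairwise_insert U'_def orthogonal_def inner_commute)
      show "\<forall>b\<in>insert v B'. norm b = 1" using B'(3) nv by auto
      show "\<forall>b\<in>insert v B'. S *v b = (b \<bullet> (S *v b)) *\<^sub>R b"
        using B'(5) Sv vv by auto
      show "span (insert v B') = U"
      proof
        show "span (insert v B') \<subseteq> U"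
          using \<open>insert v B' \<subseteq> U\<close> sub by (simp add: span_minimal)
        show "U \<subseteq> span (insert v B')"
        proof
          fix x assume x: "x \<in> U"
          have "x - (x \<bullet> v) *\<^sub>R v \<in> U'" using x vU sub vv
            by (simp add: U'_def subspace_diff subspace_scale inner_diff_left)
          then show "x \<in> span (insert v B')" unfolding span_breakdown_eq B'(4) by blast
        qed
      qed
    qed
  qed
qed

lemma spectral:
  fixes S :: "real^'n^'n"
  assumes sym: "transpose S = S"
  shows "\<exists>B. onb B \<and> S = dg B (\<lambda>b. b \<bullet> (S *v b))"
proof -
  obtain B where B: "pairwise orthogonal B" "\<forall>b\<in>B. norm b = 1" "span B = UNIV"
     "\<forall>b\<in>B. S *v b = (b \<bullet> (S *v b)) *\<^sub>R b"
    using spectral_aux[OF sym subspace_UNIV] by blast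
  have onb: "onb B" using B by (simp add: onb_def)
  have "S *v x = dg B (\<lambda>b. b \<bullet> (S *v b)) *v x" for x
  proof (rule onb_ext[OF onb])
    fix c assume c: "c \<in> B"
    define l where "l = c \<bullet> (S *v c)"
    have Sc: "S *v c = l *\<^sub>R c" unfolding l_def using B(4) c by blast
    have "c \<bullet> (S *v x) = (S *v c) \<bullet> x" by (rule sym_inner[OF sym])
    also have "\<dots> = (c \<bullet> (S *v c)) * (c \<bullet> x)" unfolding l_def[symmetric] Sc by (simp add: onb_inner[OF onb c c])
    finally show "c \<bullet> (S *v x) = c \<bullet> (dg B (\<lambda>b. b \<bullet> (S *v b)) *v x)"
      by (simp add: inner_dg[OF onb c])
  qed
  then have "S = dg B (\<lambda>b. b \<bullet> (S *v b))" unfolding matrix_eq by blast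
  then show ?thesis using onb by blast
qed




definition isproj :: "real^'n^'n \<Rightarrow> (real^'n) set \<Rightarrow> bool" where
  "isproj P W \<longleftrightarrow> (\<forall>x. P *v x \<in> W \<and> (\<forall>w\<in>W. (x - P *v x) \<bullet> w = 0))"

lemma proj_unique:
  assumes W: "subspace W" and P1: "isproj P1 W" and P2: "isproj P2 W"
  shows "P1 = P2"
  unfolding matrix_eq
proof
  fix x
  define d where "d = P1 *v x - P2 *v x"
  have dW: "d \<in> W" unfolding d_def using P1 P2 W by (simp add: isproj_def subspace_diff)
  have "d = (x - P2 *v x) - (x - P1 *v x)" by (simp add: d_def)
  then have "d \<bullet> d = (x - P2 *v x) \<bullet> d - (x - P1 *v x) \<bullet> d"
    by (metis inner_diff_left)
  also have "\<dots> = 0" using P1 P2 dW by (simp add: isproj_def)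
  finally show "P1 *v x = P2 *v x" by (simp add: d_def)
qed

lemma proj_id: "isproj P W \<Longrightarrow> subspace W \<Longrightarrow> w \<in> W \<Longrightarrow> P *v w = w"
proof -
  assume P: "isproj P W" and W: "subspace W" and w: "w \<in> W"
  define d where "d = w - P *v w"
  have dW: "d \<in> W" unfolding d_def using P W w by (simp add: isproj_def subspace_diff)
  have "d \<bullet> d = 0" using P dW by (simp add: isproj_def d_def)
  then show ?thesis by (simp add: d_def)
qed

definition ind :: "'a set \<Rightarrow> 'a \<Rightarrow> real" where "ind S b = (if b \<in> S then 1 else 0)"

lemma isproj_dg:
  assumes B: "onb B" and S: "S \<subseteq> B"
  shows "isproj (dg B (ind S)) (span S)"
  unfolding isproj_def
proof (intro allI conjI ballI)
  fix x
  have fin: "finite B" using onb_finite[OF B] .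
  have "dg B (ind S) *v x = (\<Sum>b\<in>B. (ind S b * (b \<bullet> x)) *\<^sub>R b)" by (rule dg_vec)
  also have "\<dots> = (\<Sum>b\<in>S. (b \<bullet> x) *\<^sub>R b)"
    using S fin by (intro sum.mono_neutral_cong_right) (auto simp: ind_def)
  finally have eq: "dg B (ind S) *v x = (\<Sum>b\<in>S. (b \<bullet> x) *\<^sub>R b)" .
  show "dg B (ind S) *v x \<in> span S" unfolding eq
    by (intro span_sum span_scale span_base)
  fix w assume w: "w \<in> span S"
  have "orthogonal (x - dg B (ind S) *v x) w"
  proof (rule orthogonal_to_span[OF w])
    fix y assume y: "y \<in> S"
    have "y \<bullet> (dg B (ind S) *v x) = y \<bullet> x" using y S by (simp add: inner_dg[OF B] ind_def subsetD)
    then have "(dg B (ind S) *v x) \<bullet> y = x \<bullet> y" by (simp add: inner_commute)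
    then show "orthogonal (x - dg B (ind S) *v x) y" by (simp add: orthogonal_def inner_diff_left)
  qed
  then show "(x - dg B (ind S) *v x) \<bullet> w = 0" by (simp add: orthogonal_def)
qed

lemma onb_sub_indep: "onb B \<Longrightarrow> S \<subseteq> B \<Longrightarrow> independent S"
  using onb_indep independent_mono by blast

lemma dim_span_sub: "onb B \<Longrightarrow> S \<subseteq> B \<Longrightarrow> dim (span S) = card S"
  using onb_sub_indep dim_eq_card_independent by (metis dim_span)

lemma span_support:
  fixes V :: "real^'n^'n"
  assumes B: "onb B" and V: "V = dg B l" and W: "subspace W"
    and into: "\<And>x. V *v x \<in> W" and inj: "\<And>x. x \<in> W \<Longrightarrow> V *v x = 0 \<Longrightarrow> x = 0"
  shows "span {b\<in>B. l b \<noteq> 0} = W"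
proof
  show "span {b\<in>B. l b \<noteq> 0} \<subseteq> W"
  proof (rule span_minimal[OF _ W], clarify)
    fix b assume b: "b \<in> B" "l b \<noteq> 0"
    have "V *v ((1 / l b) *\<^sub>R b) = (1 / l b) *\<^sub>R (V *v b)" by (simp add: matrix_vector_mult_scaleR)
    also have "V *v b = l b *\<^sub>R b" unfolding V by (rule dg_vec_b[OF B b(1)])
    finally have "V *v ((1 / l b) *\<^sub>R b) = b" using b(2) by simp
    then show "b \<in> W" using into by metis
  qed
  show "W \<subseteq> span {b\<in>B. l b \<noteq> 0}"
  proof
    fix w assume w: "w \<in> W"
    define P where "P = dg B (ind {b\<in>B. l b \<noteq> 0})"
    have Pw: "P *v w \<in> span {b\<in>B. l b \<noteq> 0}"
      using isproj_dg[OF B, of "{b\<in>B. l b \<noteq> 0}"] by (auto simp: P_def isproj_def)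
    have sW: "span {b\<in>B. l b \<noteq> 0} \<subseteq> W"
    proof (rule span_minimal[OF _ W], clarify)
      fix b assume b: "b \<in> B" "l b \<noteq> 0"
      have "V *v ((1 / l b) *\<^sub>R b) = (1 / l b) *\<^sub>R (V *v b)" by (simp add: matrix_vector_mult_scaleR)
      also have "V *v b = l b *\<^sub>R b" unfolding V by (rule dg_vec_b[OF B b(1)])
      finally have "V *v ((1 / l b) *\<^sub>R b) = b" using b(2) by simp
      then show "b \<in> W" using into by metis
    qed
    have w'W: "w - P *v w \<in> W" using Pw sW w W by (meson subsetD subspace_diff)
    have "V ** P = dg B (\<lambda>b. l b * ind {b\<in>B. l b \<noteq> 0} b)" unfolding V P_def by (rule dg_mult[OF B])
    also have "\<dots> = V" unfolding V by (rule dg_cong) (auto simp: ind_def)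
    finally have VP: "V ** P = V" .
    have "V *v (w - P *v w) = V *v w - (V ** P) *v w"
      by (simp add: matrix_vector_mult_diff_distrib matrix_vector_mul_assoc)
    also have "\<dots> = 0" by (simp add: VP)
    finally have "w - P *v w = 0" using inj[OF w'W] by blast
    then show "w \<in> span {b\<in>B. l b \<noteq> 0}" using Pw by simp
  qed
qed

lemma range_dg: "onb B \<Longrightarrow> range (\<lambda>x. dg B l *v x) = span {b\<in>B. l b \<noteq> 0}"
proof
  assume B: "onb B"
  have fin: "finite B" using onb_finite[OF B] .
  show "range (\<lambda>x. dg B l *v x) \<subseteq> span {b\<in>B. l b \<noteq> 0}"
  proof clarify
    fix x
    have "dg B l *v x = (\<Sum>b\<in>B. (l b * (b \<bullet> x)) *\<^sub>R b)" by (rule dg_vec)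
    also have "\<dots> = (\<Sum>b\<in>{b\<in>B. l b \<noteq> 0}. (l b * (b \<bullet> x)) *\<^sub>R b)"
      using fin by (intro sum.mono_neutral_cong_right) auto
    finally have eq: "dg B l *v x = (\<Sum>b\<in>{b\<in>B. l b \<noteq> 0}. (l b * (b \<bullet> x)) *\<^sub>R b)" .
    show "dg B l *v x \<in> span {b\<in>B. l b \<noteq> 0}"
      unfolding eq by (intro span_sum span_scale span_base) simp
  qed
  show "span {b\<in>B. l b \<noteq> 0} \<subseteq> range (\<lambda>x. dg B l *v x)"
  proof (rule span_minimal)
    show "subspace (range (\<lambda>x. dg B l *v x))"
      by (rule linear_subspace_image[OF matrix_vector_mul_linear subspace_UNIV])
    show "{b\<in>B. l b \<noteq> 0} \<subseteq> range (\<lambda>x. dg B l *v x)"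
    proof clarify
      fix b assume b: "b \<in> B" "l b \<noteq> 0"
      have "dg B l *v ((1 / l b) *\<^sub>R b) = (1 / l b) *\<^sub>R (dg B l *v b)" by (simp add: matrix_vector_mult_scaleR)
      also have "dg B l *v b = l b *\<^sub>R b" by (rule dg_vec_b[OF B b(1)])
      finally have "dg B l *v ((1 / l b) *\<^sub>R b) = b" using b(2) by simp
      then show "b \<in> range (\<lambda>x. dg B l *v x)" by (metis rangeI)
    qed
  qed
qed

lemma rank_dg:
  assumes B: "onb B" shows "rank (dg B l) = card {b\<in>B. l b \<noteq> 0}"
proof -
  have "independent {b\<in>B. l b \<noteq> 0}" by (rule onb_sub_indep[OF B]) auto
  then show ?thesis by (simp add: rank_dim_range range_dg[OF B] dim_eq_card_independent)
qed

lemma eventually_nz_at0: "eventually (\<lambda>x::real. x \<noteq> 0) (at 0)"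
  by (simp add: eventually_at_filter)

lemma pdet_dg:
  fixes B :: "(real^'n) set"
  assumes B: "onb B"
  shows "pdet (dg B l) = prod l {b\<in>B. l b \<noteq> 0}"
proof -
  have fin: "finite B" using onb_finite[OF B] .
  define S where "S = {b\<in>B. l b \<noteq> 0}"
  have SB: "S \<subseteq> B" by (auto simp: S_def)
  have cardc: "card (B - S) = CARD('n) - rank (dg B l)"
    using rank_dg[OF B, of l] onb_card[OF B] card_Diff_subset[OF finite_subset[OF SB fin] SB]
    by (simp add: S_def)
  have eq: "det (dg B l + e *\<^sub>R mat 1) / e ^ (CARD('n) - rank (dg B l)) = (\<Prod>b\<in>S. l b + e)"
    if e: "e \<noteq> 0" for e
  proof -
    have "dg B l + e *\<^sub>R mat 1 = dg B (\<lambda>b. l b + e)"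
      unfolding dg_one[OF B, symmetric] dg_scale dg_add by simp
    then have "det (dg B l + e *\<^sub>R mat 1) = (\<Prod>b\<in>B. l b + e)" by (simp add: det_dg[OF B])
    also have "\<dots> = (\<Prod>b\<in>S. l b + e) * (\<Prod>b\<in>B - S. l b + e)"
      using fin SB by (metis (no_types, lifting) mult.commute prod.subset_diff)
    also have "(\<Prod>b\<in>B - S. l b + e) = (\<Prod>b\<in>B - S. e)"
      by (rule prod.cong) (auto simp: S_def)
    also have "\<dots> = e ^ (CARD('n) - rank (dg B l))" using cardc by simp
    finally show ?thesis using e by simp
  qed
  have "isCont (\<lambda>e. (\<Prod>b\<in>S. l b + e)) 0"
    by (intro continuous_intros)
  then have lim1: "((\<lambda>e. (\<Prod>b\<in>S. l b + e)) \<longlongrightarrow> (\<Prod>b\<in>S. l b)) (at 0)"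
    by (simp add: isCont_def)
  have "((\<lambda>e. det (dg B l + e *\<^sub>R mat 1) / e ^ (CARD('n) - rank (dg B l))) \<longlongrightarrow> (\<Prod>b\<in>S. l b)) (at 0)"
    by (subst tendsto_cong[OF eventually_mono[OF eventually_nz_at0 eq]]) (use lim1 in auto)
  then show ?thesis unfolding pdet_def S_def by (intro tendsto_Lim) simp_all
qed

lemma mp_unique:
  fixes A :: "real^'n^'m"
  assumes "A ** X ** A = A" "X ** A ** X = X" "transpose (A ** X) = A ** X" "transpose (X ** A) = X ** A"
  shows "mp_pinv A = X"
  unfolding mp_pinv_def
proof (rule the_equality)
  show "A ** X ** A = A \<and> X ** A ** X = X \<and> transpose (A ** X) = A ** X \<and> transpose (X ** A) = X ** A"
    using assms by blast
  fix Y assume "A ** Y ** A = A \<and> Y ** A ** Y = Y \<and> transpose (A ** Y) = A ** Y \<and> transpose (Y ** A) = Y ** A"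
  then have y1: "A ** Y ** A = A" and y2: "Y ** A ** Y = Y" and y3: "transpose (A ** Y) = A ** Y"
    and y4: "transpose (Y ** A) = Y ** A" by auto
  note x1 = assms(1) and x2 = assms(2) and x3 = assms(3) and x4 = assms(4)
  note tm = matrix_transpose_mul
  have AY: "A ** Y = A ** X"
  proof -
    have "A ** Y = (A ** X ** A) ** Y" using x1 by simp
    also have "\<dots> = (A ** X) ** (A ** Y)" by (simp add: matrix_mul_assoc)
    also have "\<dots> = transpose (A ** X) ** transpose (A ** Y)" using x3 y3 by simp
    also have "\<dots> = transpose ((A ** Y) ** (A ** X))" by (simp add: tm)
    also have "(A ** Y) ** (A ** X) = (A ** Y ** A) ** X" by (simp add: matrix_mul_assoc)
    also have "\<dots> = A ** X" using y1 by simp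
    finally show ?thesis using x3 by simp
  qed
  have YA: "Y ** A = X ** A"
  proof -
    have "Y ** A = Y ** (A ** X ** A)" using x1 by simp
    also have "\<dots> = (Y ** A) ** (X ** A)" by (simp add: matrix_mul_assoc)
    also have "\<dots> = transpose (Y ** A) ** transpose (X ** A)" using x4 y4 by simp
    also have "\<dots> = transpose ((X ** A) ** (Y ** A))" by (simp add: tm)
    also have "(X ** A) ** (Y ** A) = X ** (A ** Y ** A)" by (simp add: matrix_mul_assoc)
    also have "\<dots> = X ** A" using y1 by simp
    finally show ?thesis using x4 by simp
  qed
  have "Y = Y ** A ** Y" using y2 by simp
  also have "\<dots> = X ** A ** Y" using YA by simp
  also have "\<dots> = X ** (A ** Y)" by (simp add: matrix_mul_assoc)
  also have "\<dots> = X ** (A ** X)" using AY by simp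
  also have "\<dots> = X" using x2 by (simp add: matrix_mul_assoc)
  finally show "Y = X" .
qed

definition pinvf :: "real \<Rightarrow> real" where "pinvf x = (if x = 0 then 0 else 1 / x)"

lemma pinv_dg:
  assumes B: "onb B" shows "mp_pinv (dg B l) = dg B (\<lambda>b. pinvf (l b))"
proof (rule mp_unique)
  show "dg B l ** dg B (\<lambda>b. pinvf (l b)) ** dg B l = dg B l"
    unfolding dg_mult[OF B] by (rule dg_cong) (simp add: pinvf_def)
  show "dg B (\<lambda>b. pinvf (l b)) ** dg B l ** dg B (\<lambda>b. pinvf (l b)) = dg B (\<lambda>b. pinvf (l b))"
    unfolding dg_mult[OF B] by (rule dg_cong) (simp add: pinvf_def)
  show "transpose (dg B l ** dg B (\<lambda>b. pinvf (l b))) = dg B l ** dg B (\<lambda>b. pinvf (l b))"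
    unfolding dg_mult[OF B] by (rule dg_transpose)
  show "transpose (dg B (\<lambda>b. pinvf (l b)) ** dg B l) = dg B (\<lambda>b. pinvf (l b)) ** dg B l"
    unfolding dg_mult[OF B] by (rule dg_transpose)
qed




lemma mm_scaleR_right: "(A::real^'n^'m) ** (c *\<^sub>R B) = c *\<^sub>R (A ** (B::real^'p^'n))"
  by (simp add: matrix_matrix_mult_def vec_eq_iff sum_distrib_left mult_ac)
lemma mm_scaleR_left: "(c *\<^sub>R (A::real^'n^'m)) ** (B::real^'p^'n) = c *\<^sub>R (A ** B)"
  by (simp add: matrix_matrix_mult_def vec_eq_iff sum_distrib_left mult_ac)
lemma mm_add_rdistrib: "((A::real^'n^'m) + B) ** (C::real^'p^'n) = A ** C + B ** C"
  by (simp add: matrix_matrix_mult_def vec_eq_iff sum.distrib algebra_simps)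
lemma mm_diff_ldistrib: "(A::real^'n^'m) ** (B - C) = A ** B - A ** (C::real^'p^'n)"
  by (simp add: matrix_matrix_mult_def vec_eq_iff sum_subtractf algebra_simps)

lemma ln_lower: "\<bar>x\<bar> \<le> 1/2 \<Longrightarrow> x - 2 * x\<^sup>2 \<le> ln (1 + x)" for x :: real
proof (cases "x \<ge> 0")
  case True
  assume "\<bar>x\<bar> \<le> 1/2"
  then have "x - x\<^sup>2 \<le> ln (1 + x)" using True by (intro ln_one_plus_pos_lower_bound) auto
  moreover have "x\<^sup>2 \<ge> 0" by simp
  ultimately show ?thesis by linarith
next
  case False
  assume "\<bar>x\<bar> \<le> 1/2"
  then have "- (-x) - 2 * (-x)\<^sup>2 \<le> ln (1 - (-x))" using False
    by (intro ln_one_minus_pos_lower_bound) auto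
  then show ?thesis by simp
qed

lemma sqrt_facts:
  assumes B: "onb B" and mu: "\<And>b. b \<in> B \<Longrightarrow> mu b > 0"
  shows "dg B (\<lambda>b. 1 / sqrt (mu b)) ** dg B (\<lambda>b. sqrt (mu b)) = mat 1"
    "dg B (\<lambda>b. sqrt (mu b)) ** dg B (\<lambda>b. 1 / sqrt (mu b)) = mat 1"
    "dg B (\<lambda>b. sqrt (mu b)) ** dg B (\<lambda>b. sqrt (mu b)) = dg B mu"
    "dg B (\<lambda>b. 1 / sqrt (mu b)) ** dg B (\<lambda>b. 1 / sqrt (mu b)) = dg B (\<lambda>b. 1 / mu b)"
proof -
  show "dg B (\<lambda>b. 1 / sqrt (mu b)) ** dg B (\<lambda>b. sqrt (mu b)) = mat 1" unfolding dg_mult[OF B] dg_one[OF B, symmetric]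
    by (rule dg_cong) (use mu in \<open>force simp: field_simps less_imp_neq[symmetric]\<close>)
  show "dg B (\<lambda>b. sqrt (mu b)) ** dg B (\<lambda>b. 1 / sqrt (mu b)) = mat 1" unfolding dg_mult[OF B] dg_one[OF B, symmetric]
    by (rule dg_cong) (use mu in \<open>force simp: field_simps less_imp_neq[symmetric]\<close>)
  show "dg B (\<lambda>b. sqrt (mu b)) ** dg B (\<lambda>b. sqrt (mu b)) = dg B mu" unfolding dg_mult[OF B]
    by (rule dg_cong) (use mu in \<open>force simp: less_imp_le less_imp_neq[symmetric]\<close>)
  show "dg B (\<lambda>b. 1 / sqrt (mu b)) ** dg B (\<lambda>b. 1 / sqrt (mu b)) = dg B (\<lambda>b. 1 / mu b)" unfolding dg_mult[OF B]
    by (rule dg_cong) (use mu in \<open>force simp: less_imp_le less_imp_neq[symmetric]\<close>)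
qed

lemma sym_congr:
  fixes R M :: "real^'n^'n"
  assumes "transpose R = R" "transpose M = M"
  shows "transpose (R ** M ** R) = R ** M ** R"
  using assms by (simp add: matrix_transpose_mul matrix_mul_assoc)

lemma conc0:
  fixes B :: "(real^'n) set" and M :: "real^'n^'n"
  assumes B: "onb B" and mu: "\<And>b. b \<in> B \<Longrightarrow> mu b > 0"
    and Msym: "transpose M = M" and Mpd: "\<And>x. x \<noteq> 0 \<Longrightarrow> x \<bullet> (M *v x) > 0"
  shows "ln (det M) \<le> ln (det (dg B mu)) + trace (dg B (\<lambda>b. 1 / mu b) ** (M - dg B mu))"
proof -
  define R where "R = dg B (\<lambda>b. 1 / sqrt (mu b))"
  define Ri where "Ri = dg B (\<lambda>b. sqrt (mu b))"
  note sf = sqrt_facts[of B mu, OF B mu, folded R_def Ri_def]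
  define X where "X = R ** M ** R"
  have Xsym: "transpose X = X" unfolding X_def using dg_transpose[of B "\<lambda>b. 1 / sqrt (mu b)", folded R_def] Msym by (simp add: matrix_transpose_mul matrix_mul_assoc)
  obtain B' where B': "onb B'" and Xd: "X = dg B' (\<lambda>b. b \<bullet> (X *v b))"
    using spectral[OF Xsym] by blast
  define nu where "nu b = b \<bullet> (X *v b)" for b
  have Xd': "X = dg B' nu" using Xd by (simp add: nu_def[abs_def])
  have nupos: "nu b > 0" if b: "b \<in> B'" for b
  proof -
    have "b \<noteq> 0" using B' b by (auto simp: onb_def)
    have Rb: "R *v b \<noteq> 0"
    proof
      assume "R *v b = 0"
      then have "Ri *v (R *v b) = 0" by simp
      then have "b = 0" by (simp add: matrix_vector_mul_assoc sf(2))
      with \<open>b \<noteq> 0\<close> show False by simp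
    qed
    have "nu b = b \<bullet> (R *v (M *v (R *v b)))" by (simp add: nu_def X_def matrix_vector_mul_assoc matrix_mul_assoc)
    also have "\<dots> = (R *v b) \<bullet> (M *v (R *v b))" by (rule sym_inner[OF dg_transpose[of B "\<lambda>b. 1 / sqrt (mu b)", folded R_def]])
    finally show ?thesis using Mpd[OF Rb] by simp
  qed
  have MX: "M = Ri ** X ** Ri"
  proof -
    have "Ri ** X ** Ri = (Ri ** R) ** M ** (R ** Ri)" by (simp add: X_def matrix_mul_assoc)
    then show ?thesis by (simp add: sf(1,2))
  qed
  have detN: "det (dg B mu) > 0" using det_dg[OF B] mu prod_pos by (metis)
  have "det M = det (Ri ** Ri) * det X" unfolding MX det_mul by (simp add: mult_ac)
  also have "\<dots> = det (dg B mu) * prod nu B'" by (simp add: sf(3) Xd' det_dg[OF B'])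
  finally have dM: "det M = det (dg B mu) * prod nu B'" .
  have finB': "finite B'" using onb_finite[OF B'] .
  have lnM: "ln (det M) = ln (det (dg B mu)) + (\<Sum>b\<in>B'. ln (nu b))"
    unfolding dM using detN nupos finB' by (simp add: ln_mult prod_pos ln_prod less_imp_neq[symmetric])
  have tr: "trace (dg B (\<lambda>b. 1 / mu b) ** (M - dg B mu)) = sum nu B' - real CARD('n)"
  proof -
    have "dg B (\<lambda>b. 1 / mu b) ** dg B mu = mat 1"
      unfolding dg_mult[OF B] dg_one[OF B, symmetric] by (rule dg_cong) (use mu in \<open>force simp: field_simps less_imp_neq[symmetric]\<close>)
    then have "trace (dg B (\<lambda>b. 1 / mu b) ** (M - dg B mu)) = trace (R ** R ** M) - real CARD('n)"
      by (simp add: mm_diff_ldistrib trace_sub trace_I sf(4))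
    also have "trace (R ** R ** M) = trace X"
      unfolding X_def by (metis matrix_mul_assoc trace_mul_sym)
    also have "\<dots> = sum nu B'" by (simp add: Xd' trace_dg[OF B'])
    finally show ?thesis .
  qed
  have "(\<Sum>b\<in>B'. ln (nu b)) \<le> (\<Sum>b\<in>B'. nu b - 1)"
    by (intro sum_mono ln_le_minus_one nupos)
  also have "\<dots> = sum nu B' - real CARD('n)" by (simp add: sum_subtractf onb_card[OF B'])
  finally show ?thesis unfolding lnM tr by simp
qed

lemma deriv0:
  fixes B :: "(real^'n) set" and D :: "real^'n^'n"
  assumes B: "onb B" and mu: "\<And>b. b \<in> B \<Longrightarrow> mu b > 0"
    and Dsym: "transpose D = D"
  shows "\<exists>c t0. t0 > 0 \<and> (\<forall>t. 0 < t \<and> t \<le> t0 \<longrightarrow>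
     ln (det (dg B mu)) + t * trace (dg B (\<lambda>b. 1 / mu b) ** D) - c * t\<^sup>2 \<le> ln (det (dg B mu + t *\<^sub>R D)))"
proof -
  define R where "R = dg B (\<lambda>b. 1 / sqrt (mu b))"
  define Ri where "Ri = dg B (\<lambda>b. sqrt (mu b))"
  note sf = sqrt_facts[of B mu, OF B mu, folded R_def Ri_def]
  define Y where "Y = R ** D ** R"
  have Ysym: "transpose Y = Y" unfolding Y_def using dg_transpose[of B "\<lambda>b. 1 / sqrt (mu b)", folded R_def] Dsym by (simp add: matrix_transpose_mul matrix_mul_assoc)
  obtain B' where B': "onb B'" and Yd: "Y = dg B' (\<lambda>b. b \<bullet> (Y *v b))"
    using spectral[OF Ysym] by blast
  define nu where "nu b = b \<bullet> (Y *v b)" for b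
  have Yd': "Y = dg B' nu" using Yd by (simp add: nu_def[abs_def])
  have finB': "finite B'" using onb_finite[OF B'] .
  have DY: "D = Ri ** Y ** Ri"
  proof -
    have "Ri ** Y ** Ri = (Ri ** R) ** D ** (R ** Ri)" by (simp add: Y_def matrix_mul_assoc)
    then show ?thesis by (simp add: sf(1,2))
  qed
  have detN: "det (dg B mu) > 0" using det_dg[OF B] mu prod_pos by (metis)
  have tr: "trace (dg B (\<lambda>b. 1 / mu b) ** D) = sum nu B'"
  proof -
    have "trace (dg B (\<lambda>b. 1 / mu b) ** D) = trace (R ** R ** D)" by (simp add: sf(4))
    also have "\<dots> = trace Y" unfolding Y_def by (metis matrix_mul_assoc trace_mul_sym)
    also have "\<dots> = sum nu B'" by (simp add: Yd' trace_dg[OF B'])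
    finally show ?thesis .
  qed
  define s where "s = (\<Sum>b\<in>B'. \<bar>nu b\<bar>)"
  define t0 where "t0 = 1 / (2 * (s + 1))"
  define c where "c = 2 * (\<Sum>b\<in>B'. (nu b)\<^sup>2)"
  have s0: "s \<ge> 0" unfolding s_def by (simp add: sum_nonneg)
  have t0p: "t0 > 0" unfolding t0_def using s0 by simp
  have main: "ln (det (dg B mu)) + t * trace (dg B (\<lambda>b. 1 / mu b) ** D) - c * t\<^sup>2 \<le> ln (det (dg B mu + t *\<^sub>R D))"
    if t: "0 < t" "t \<le> t0" for t
  proof -
    have small: "\<bar>t * nu b\<bar> \<le> 1/2" if b: "b \<in> B'" for b
    proof -
      have "\<bar>nu b\<bar> \<le> s" unfolding s_def using finB' b
        by (intro member_le_sum) auto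
      then have "\<bar>t * nu b\<bar> \<le> t0 * s" using t by (simp add: abs_mult mult_mono)
      also have "t0 * s \<le> 1/2" unfolding t0_def using s0 by (simp add: field_simps)
      finally show ?thesis .
    qed
    have eq: "dg B mu + t *\<^sub>R D = Ri ** dg B' (\<lambda>b. 1 + t * nu b) ** Ri"
    proof -
      have "dg B' (\<lambda>b. 1 + t * nu b) = mat 1 + t *\<^sub>R Y"
        unfolding Yd' dg_scale dg_one[OF B', symmetric] dg_add by simp
      then have "Ri ** dg B' (\<lambda>b. 1 + t * nu b) ** Ri = Ri ** Ri + t *\<^sub>R (Ri ** Y ** Ri)"
        by (simp add: matrix_add_ldistrib mm_add_rdistrib mm_scaleR_right mm_scaleR_left)
      then show ?thesis by (simp add: sf(3) DY[symmetric])
    qed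
    have pos: "1 + t * nu b > 0" if "b \<in> B'" for b using small[OF that] by (simp add: abs_le_iff)
    have "det (dg B mu + t *\<^sub>R D) = det (Ri ** Ri) * (\<Prod>b\<in>B'. 1 + t * nu b)"
      unfolding eq det_mul det_dg[OF B'] by (simp add: mult_ac)
    then have "ln (det (dg B mu + t *\<^sub>R D)) = ln (det (dg B mu)) + (\<Sum>b\<in>B'. ln (1 + t * nu b))"
      using detN pos finB' by (simp add: sf(3) ln_mult prod_pos ln_prod less_imp_neq[symmetric])
    moreover have "(\<Sum>b\<in>B'. t * nu b - 2 * (t * nu b)\<^sup>2) \<le> (\<Sum>b\<in>B'. ln (1 + t * nu b))"
      by (intro sum_mono ln_lower small)
    moreover have "(\<Sum>b\<in>B'. t * nu b - 2 * (t * nu b)\<^sup>2) = t * sum nu B' - c * t\<^sup>2"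
      unfolding c_def by (simp add: sum_subtractf sum_distrib_left sum_distrib_right power_mult_distrib mult_ac)
    ultimately show ?thesis unfolding tr by linarith
  qed
  show ?thesis using t0p main by blast
qed

lemma psd_zero:
  fixes V :: "real^'n^'n"
  assumes sym: "transpose V = V" and psd: "\<And>y. y \<bullet> (V *v y) \<ge> 0" and x: "x \<bullet> (V *v x) = 0"
  shows "V *v x = 0"
proof -
  obtain B where B: "onb B" and Vd: "V = dg B (\<lambda>b. b \<bullet> (V *v b))" using spectral[OF sym] by blast
  define l where "l b = b \<bullet> (V *v b)" for b
  have Vd': "V = dg B l" using Vd by (simp add: l_def[abs_def])
  have fin: "finite B" using onb_finite[OF B] .
  have l0: "l b \<ge> 0" for b using psd by (simp add: l_def)
  have "x \<bullet> (V *v x) = (\<Sum>b\<in>B. l b * (b \<bullet> x)\<^sup>2)"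
    unfolding Vd' dg_vec by (simp add: inner_sum_right power2_eq_square inner_commute mult_ac)
  then have "(\<Sum>b\<in>B. l b * (b \<bullet> x)\<^sup>2) = 0" using x by simp
  then have z: "\<forall>b\<in>B. l b * (b \<bullet> x)\<^sup>2 = 0" using fin l0
    by (subst sum_nonneg_eq_0_iff[symmetric]) auto
  have "V *v x = (\<Sum>b\<in>B. (l b * (b \<bullet> x)) *\<^sub>R b)" unfolding Vd' by (rule dg_vec)
  also have "\<dots> = 0" using z by (intro sum.neutral) (auto simp: power2_eq_square)
  finally show ?thesis .
qed

lemma psd_det:
  fixes V :: "real^'n^'n"
  assumes sym: "transpose V = V" and psd: "\<And>y. y \<bullet> (V *v y) \<ge> 0"
  shows "det V \<ge> 0"
proof -
  obtain B where B: "onb B" and Vd: "V = dg B (\<lambda>b. b \<bullet> (V *v b))" using spectral[OF sym] by blast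
  show ?thesis by (subst Vd, subst det_dg[OF B]) (intro prod_nonneg psd)
qed




definition good :: "real^'n^'n \<Rightarrow> (real^'n) set \<Rightarrow> bool" where
  "good V W \<longleftrightarrow> transpose V = V \<and> (\<forall>y. y \<bullet> (V *v y) \<ge> 0) \<and> (\<forall>x. V *v x \<in> W)
     \<and> (\<forall>x\<in>W. V *v x = 0 \<longrightarrow> x = 0)"

lemma dg_pd:
  assumes B: "onb B" and mu: "\<And>b. b \<in> B \<Longrightarrow> mu b > 0" and x: "x \<noteq> 0"
  shows "x \<bullet> (dg B mu *v x) > 0"
proof -
  have fin: "finite B" using onb_finite[OF B] .
  have mu0: "mu b \<ge> 0" if "b \<in> B" for b using mu[OF that] by simp
  have eq: "x \<bullet> (dg B mu *v x) = (\<Sum>b\<in>B. mu b * (b \<bullet> x)\<^sup>2)"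
    unfolding dg_vec by (simp add: inner_sum_right power2_eq_square inner_commute mult_ac)
  have "\<exists>b\<in>B. b \<bullet> x \<noteq> 0"
  proof (rule ccontr)
    assume "\<not> ?thesis"
    then have "x = 0" by (intro onb_ext[OF B]) auto
    with x show False by simp
  qed
  then obtain b where b: "b \<in> B" "b \<bullet> x \<noteq> 0" by blast
  have "0 < mu b * (b \<bullet> x)\<^sup>2" using mu[OF b(1)] b(2) by simp
  also have "\<dots> \<le> (\<Sum>b\<in>B. mu b * (b \<bullet> x)\<^sup>2)"
    using fin b(1) mu0 by (intro member_le_sum) auto
  finally show ?thesis unfolding eq .
qed

lemma good_decomp:
  fixes V P :: "real^'n^'n"
  assumes g: "good V W" and W: "subspace W" and P: "isproj P W"
  shows "\<exists>B mu. onb B \<and> (\<forall>b\<in>B. mu b > 0) \<and> V + mat 1 - P = dg B mu \<and>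
    mp_pinv V + mat 1 - P = dg B (\<lambda>b. 1 / mu b) \<and> pdet V = det (dg B mu) \<and>
    trace (mp_pinv V ** V) = real (dim W)"
proof -
  have sym: "transpose V = V" and psd: "\<And>y. y \<bullet> (V *v y) \<ge> 0" and into: "\<And>x. V *v x \<in> W"
    and inj: "\<And>x. x \<in> W \<Longrightarrow> V *v x = 0 \<Longrightarrow> x = 0" using g by (auto simp: good_def)
  obtain B where B: "onb B" and Vd: "V = dg B (\<lambda>b. b \<bullet> (V *v b))" using spectral[OF sym] by blast
  define l where "l b = b \<bullet> (V *v b)" for b
  have Vd': "V = dg B l" using Vd by (simp add: l_def[abs_def])
  have fin: "finite B" using onb_finite[OF B] .
  have l0: "l b \<ge> 0" for b using psd by (simp add: l_def)
  define S where "S = {b\<in>B. l b \<noteq> 0}"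
  have SB: "S \<subseteq> B" by (auto simp: S_def)
  have spanS: "span S = W" unfolding S_def by (rule span_support[OF B Vd' W into inj])
  have PS: "P = dg B (ind S)"
    using proj_unique[OF W P] isproj_dg[OF B SB] spanS by simp
  define mu where "mu b = (if l b = 0 then 1 else l b)" for b
  have mupos: "\<forall>b\<in>B. mu b > 0" using l0 by (auto simp: mu_def less_le)
  have N: "V + mat 1 - P = dg B mu"
    unfolding Vd' PS dg_one[OF B, symmetric] dg_add dg_diff
    by (rule dg_cong) (auto simp: mu_def ind_def S_def)
  have Ni: "mp_pinv V + mat 1 - P = dg B (\<lambda>b. 1 / mu b)"
    unfolding Vd' pinv_dg[OF B] PS dg_one[OF B, symmetric] dg_add dg_diff
    by (rule dg_cong) (auto simp: mu_def ind_def S_def pinvf_def)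
  have "pdet V = prod l S" unfolding Vd' pdet_dg[OF B] S_def ..
  also have "\<dots> = prod mu B"
    by (rule prod.mono_neutral_cong_left[OF fin SB]) (auto simp: S_def mu_def)
  also have "\<dots> = det (dg B mu)" by (simp add: det_dg[OF B])
  finally have pd: "pdet V = det (dg B mu)" .
  have "trace (mp_pinv V ** V) = trace (dg B (\<lambda>b. pinvf (l b) * l b))"
    unfolding Vd' pinv_dg[OF B] dg_mult[OF B] ..
  also have "\<dots> = (\<Sum>b\<in>B. pinvf (l b) * l b)" by (rule trace_dg[OF B])
  also have "\<dots> = (\<Sum>b\<in>S. 1)"
    by (rule sum.mono_neutral_cong_right[OF fin SB]) (auto simp: S_def pinvf_def)
  also have "\<dots> = real (dim W)" using dim_span_sub[OF B SB] spanS by simp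
  finally have tr: "trace (mp_pinv V ** V) = real (dim W)" .
  show ?thesis using B mupos N Ni pd tr by blast
qed

lemma good_pdet_pos:
  assumes g: "good V W" and W: "subspace W" and P: "isproj P W"
  shows "pdet V = det (V + mat 1 - P)" "pdet V > 0"
proof -
  obtain B mu where B: "onb B" "\<forall>b\<in>B. mu b > 0" "V + mat 1 - P = dg B mu" "pdet V = det (dg B mu)"
    using good_decomp[OF g W P] by blast
  show "pdet V = det (V + mat 1 - P)" using B by simp
  show "pdet V > 0" using B by (simp add: det_dg prod_pos)
qed

lemma trace_IP:
  fixes A P D :: "real^'n^'n"
  assumes W: "subspace W" and P: "isproj P W" and D: "\<And>x. D *v x \<in> W"
  shows "trace ((A + mat 1 - P) ** D) = trace (A ** D)"
proof -
  have "(A + mat 1 - P) ** D = A ** D"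
    unfolding matrix_eq
  proof
    fix x
    have "((A + mat 1 - P) ** D) *v x = A *v (D *v x) + (D *v x - P *v (D *v x))"
      by (simp add: matrix_vector_mul_assoc[symmetric] matrix_vector_mult_add_rdistrib
          matrix_vector_mult_diff_rdistrib)
    also have "P *v (D *v x) = D *v x" by (rule proj_id[OF P W D])
    finally show "((A + mat 1 - P) ** D) *v x = (A ** D) *v x"
      by (simp add: matrix_vector_mul_assoc[symmetric])
  qed
  then show ?thesis by simp
qed

lemma good_conc:
  fixes V V' P :: "real^'n^'n"
  assumes g: "good V W" and g': "good V' W" and W: "subspace W" and P: "isproj P W"
  shows "ln (pdet V') \<le> ln (pdet V) + trace (mp_pinv V ** (V' - V))"
proof -
  obtain B mu where B: "onb B" and mu: "\<forall>b\<in>B. mu b > 0" and N: "V + mat 1 - P = dg B mu"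
    and Ni: "mp_pinv V + mat 1 - P = dg B (\<lambda>b. 1 / mu b)" and pd: "pdet V = det (dg B mu)"
    using good_decomp[OF g W P] by blast
  obtain B' mu' where B': "onb B'" and mu': "\<forall>b\<in>B'. mu' b > 0" and N': "V' + mat 1 - P = dg B' mu'"
    and pd': "pdet V' = det (dg B' mu')"
    using good_decomp[OF g' W P] by blast
  define M where "M = V' + mat 1 - P"
  have Msym: "transpose M = M" unfolding M_def N' by (rule dg_transpose)
  have Mpd: "x \<bullet> (M *v x) > 0" if "x \<noteq> 0" for x
    unfolding M_def N' using dg_pd[OF B'] mu' that by blast
  have MN: "M - dg B mu = V' - V" unfolding M_def N[symmetric] by simp
  have into: "(V' - V) *v x \<in> W" for x
    using g g' W by (simp add: good_def matrix_vector_mult_diff_rdistrib subspace_diff)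
  have "ln (det M) \<le> ln (det (dg B mu)) + trace (dg B (\<lambda>b. 1 / mu b) ** (M - dg B mu))"
    by (rule conc0[OF B _ Msym Mpd]) (use mu in auto)
  also have "trace (dg B (\<lambda>b. 1 / mu b) ** (M - dg B mu)) = trace (mp_pinv V ** (V' - V))"
    unfolding MN Ni[symmetric] by (rule trace_IP[OF W P into])
  finally show ?thesis using pd pd' N' by (simp add: M_def)
qed

lemma good_deriv:
  fixes V D P :: "real^'n^'n"
  assumes g: "good V W" and W: "subspace W" and P: "isproj P W"
    and Dsym: "transpose D = D" and Dinto: "\<And>x. D *v x \<in> W"
  shows "\<exists>c t0. t0 > 0 \<and> (\<forall>t. 0 < t \<and> t \<le> t0 \<longrightarrow>
     ln (pdet V) + t * trace (mp_pinv V ** D) - c * t\<^sup>2 \<le> ln (det ((V + t *\<^sub>R D) + mat 1 - P)))"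
proof -
  obtain B mu where B: "onb B" and mu: "\<forall>b\<in>B. mu b > 0" and N: "V + mat 1 - P = dg B mu"
    and Ni: "mp_pinv V + mat 1 - P = dg B (\<lambda>b. 1 / mu b)" and pd: "pdet V = det (dg B mu)"
    using good_decomp[OF g W P] by blast
  obtain c t0 where t0: "t0 > 0" and main: "\<forall>t. 0 < t \<and> t \<le> t0 \<longrightarrow>
     ln (det (dg B mu)) + t * trace (dg B (\<lambda>b. 1 / mu b) ** D) - c * t\<^sup>2 \<le> ln (det (dg B mu + t *\<^sub>R D))"
    using deriv0[OF B _ Dsym, of mu] mu by blast
  have tr: "trace (dg B (\<lambda>b. 1 / mu b) ** D) = trace (mp_pinv V ** D)"
    unfolding Ni[symmetric] by (rule trace_IP[OF W P Dinto])
  have eq: "(V + t *\<^sub>R D) + mat 1 - P = dg B mu + t *\<^sub>R D" for t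
    unfolding N[symmetric] by (simp add: algebra_simps)
  show ?thesis using t0 main unfolding tr pd eq by blast
qed




definition Wsp :: "nat \<Rightarrow> (nat \<Rightarrow> nat set) \<Rightarrow> (nat \<Rightarrow> nat \<Rightarrow> real^'d) \<Rightarrow> nat \<Rightarrow> (real^'d) set" where
  "Wsp M A e a = span ((\<lambda>i. e i a) ` Rset M A a)"

lemma finite_Rset: "finite (Rset M A a)"
  unfolding Rset_def by simp

lemma Vmat_vec: "Vmat M A e p a *v x = (\<Sum>j\<in>Rset M A a. (p j a * (e j a \<bullet> x)) *\<^sub>R e j a)"
  unfolding Vmat_def sum_matrix_vec
  by (rule sum.cong) (simp_all add: matrix_vector_mult_scaleR[symmetric] vec_eq_iff matrix_vector_mult_def
      outer_def inner_vec_def sum_distrib_left mult_ac)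

lemma Vmat_entry: "Vmat M A e p a $ r $ c = (\<Sum>j\<in>Rset M A a. p j a * (e j a $ r * e j a $ c))"
  unfolding Vmat_def by (simp add: outer_entry sum_component)

lemma Vmat_sym: "transpose (Vmat M A e p a) = Vmat M A e p a"
  by (simp add: transpose_def Vmat_entry vec_eq_iff mult_ac)

lemma Vmat_quad: "x \<bullet> (Vmat M A e p a *v x) = (\<Sum>j\<in>Rset M A a. p j a * (e j a \<bullet> x)\<^sup>2)"
  unfolding Vmat_vec by (simp add: inner_sum_right power2_eq_square inner_commute mult_ac)

lemma Vmat_psd:
  assumes "\<And>j. j \<in> Rset M A a \<Longrightarrow> p j a \<ge> 0"
  shows "x \<bullet> (Vmat M A e p a *v x) \<ge> 0"
  unfolding Vmat_quad using assms by (intro sum_nonneg) auto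

lemma Vmat_into_span:
  "Vmat M A e p a *v x \<in> span ((\<lambda>i. p i a *\<^sub>R e i a) ` Rset M A a)"
proof -
  have "Vmat M A e p a *v x = (\<Sum>j\<in>Rset M A a. (e j a \<bullet> x) *\<^sub>R (p j a *\<^sub>R e j a))"
    unfolding Vmat_vec by (simp add: mult.commute)
  also have "\<dots> \<in> span ((\<lambda>i. p i a *\<^sub>R e i a) ` Rset M A a)"
    by (intro span_sum span_scale span_base) auto
  finally show ?thesis .
qed

lemma span_scaled_sub: "span ((\<lambda>i. p i a *\<^sub>R e i a) ` Rset M A a) \<subseteq> Wsp M A e a"
  unfolding Wsp_def by (intro span_minimal subspace_span) (auto intro: span_scale span_base)

lemma Vmat_into: "Vmat M A e p a *v x \<in> Wsp M A e a"
  using Vmat_into_span span_scaled_sub by blast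

lemma Vmat_inj:
  assumes nn: "\<And>j. j \<in> Rset M A a \<Longrightarrow> p j a \<ge> 0"
    and sp: "span ((\<lambda>i. p i a *\<^sub>R e i a) ` Rset M A a) = Wsp M A e a"
    and x: "x \<in> Wsp M A e a" and V0: "Vmat M A e p a *v x = 0"
  shows "x = 0"
proof -
  have "(\<Sum>j\<in>Rset M A a. p j a * (e j a \<bullet> x)\<^sup>2) = 0" using V0 Vmat_quad[of x M A e p a] by simp
  then have z: "\<forall>j\<in>Rset M A a. p j a * (e j a \<bullet> x)\<^sup>2 = 0"
    using finite_Rset nn by (subst sum_nonneg_eq_0_iff[symmetric]) auto
  have "orthogonal x y" if "y \<in> Wsp M A e a" for y
  proof -
    have "y \<in> span ((\<lambda>i. p i a *\<^sub>R e i a) ` Rset M A a)" using that sp by simp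
    then show ?thesis
    proof (rule orthogonal_to_span)
      fix z assume "z \<in> (\<lambda>i. p i a *\<^sub>R e i a) ` Rset M A a"
      then obtain j where j: "j \<in> Rset M A a" "z = p j a *\<^sub>R e j a" by blast
      have "p j a * (e j a \<bullet> x) = 0" using z j(1) by (auto simp: power2_eq_square)
      then show "orthogonal x z" using j(2) by (simp add: orthogonal_def inner_commute)
    qed
  qed
  then have "x \<bullet> x = 0" using x by (simp add: orthogonal_def)
  then show ?thesis by simp
qed

lemma subspace_Wsp: "subspace (Wsp M A e a)"
  unfolding Wsp_def by simp

lemma good_Vmat:
  assumes nn: "\<And>j. j \<in> Rset M A a \<Longrightarrow> p j a \<ge> 0"
    and sp: "span ((\<lambda>i. p i a *\<^sub>R e i a) ` Rset M A a) = Wsp M A e a"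
  shows "good (Vmat M A e p a) (Wsp M A e a)"
proof -
  have "y \<bullet> (Vmat M A e p a *v y) \<ge> 0" for y by (rule Vmat_psd) (rule nn)
  then show ?thesis unfolding good_def using Vmat_sym Vmat_into Vmat_inj[of M A a p e, OF nn sp] by blast
qed

lemma Cset_nn: "p \<in> Cset M K A e \<Longrightarrow> j \<in> Rset M A a \<Longrightarrow> p j a \<ge> 0"
  by (auto simp: Cset_def Rset_def)

lemma Cset_span:
  assumes p: "p \<in> Cset M K A e" and a: "a \<in> {1..K}"
  shows "span ((\<lambda>i. p i a *\<^sub>R e i a) ` Rset M A a) = Wsp M A e a"
proof (cases "Rset M A a = {}")
  case True then show ?thesis by (simp add: Wsp_def)
next
  case False
  then have d: "dim ((\<lambda>i. p i a *\<^sub>R e i a) ` Rset M A a) = dim ((\<lambda>i. e i a) ` Rset M A a)"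
    using p a by (auto simp: Cset_def)
  show ?thesis
  proof (rule subspace_dim_equal)
    show "subspace (span ((\<lambda>i. p i a *\<^sub>R e i a) ` Rset M A a))" by simp
    show "subspace (Wsp M A e a)" by (rule subspace_Wsp)
    show "span ((\<lambda>i. p i a *\<^sub>R e i a) ` Rset M A a) \<subseteq> Wsp M A e a" by (rule span_scaled_sub)
    show "dim (Wsp M A e a) \<le> dim (span ((\<lambda>i. p i a *\<^sub>R e i a) ` Rset M A a))"
      using d by (simp add: Wsp_def)
  qed
qed

lemma good_Cset: "p \<in> Cset M K A e \<Longrightarrow> a \<in> {1..K} \<Longrightarrow> good (Vmat M A e p a) (Wsp M A e a)"
  by (rule good_Vmat[OF Cset_nn Cset_span]) auto

lemma exists_proj:
  assumes g: "good V W" and W: "subspace W"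
  shows "\<exists>B S. onb B \<and> S \<subseteq> B \<and> isproj (dg B (ind S)) W"
proof -
  have sym: "transpose V = V" and into: "\<And>x. V *v x \<in> W"
    and inj: "\<And>x. x \<in> W \<Longrightarrow> V *v x = 0 \<Longrightarrow> x = 0" using g by (auto simp: good_def)
  obtain B where B: "onb B" and Vd: "V = dg B (\<lambda>b. b \<bullet> (V *v b))" using spectral[OF sym] by blast
  have sp: "span {b\<in>B. b \<bullet> (V *v b) \<noteq> 0} = W" by (rule span_support[OF B Vd W into inj])
  have "isproj (dg B (ind {b\<in>B. b \<bullet> (V *v b) \<noteq> 0})) W"
    using isproj_dg[OF B, of "{b\<in>B. b \<bullet> (V *v b) \<noteq> 0}"] sp by simp
  moreover have "{b\<in>B. b \<bullet> (V *v b) \<noteq> 0} \<subseteq> B" by blast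
  ultimately show ?thesis using B by blast
qed

lemma mm_sum_right: "(Q::real^'n^'n) ** (\<Sum>j\<in>J. X j) = (\<Sum>j\<in>J. Q ** X j)"
  by (induction J rule: infinite_finite_induct) (auto simp: matrix_add_ldistrib)

lemma trace_Vmat: "trace (Q ** Vmat M A e p a) = (\<Sum>j\<in>Rset M A a. p j a * (e j a \<bullet> (Q *v e j a)))"
  unfolding Vmat_def mm_sum_right trace_sum
  by (simp add: mm_scaleR_right trace_scaleR trace_outer_mult)

lemma Vmat_diff: "Vmat M A e p a - Vmat M A e q a = Vmat M A e (\<lambda>j b. p j b - q j b) a"
  unfolding Vmat_def by (simp add: sum_subtractf scaleR_diff_left)

lemma Vmat_cong: "(\<And>j. j \<in> Rset M A a \<Longrightarrow> p j a = q j a) \<Longrightarrow> Vmat M A e p a = Vmat M A e q a"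
  unfolding Vmat_def by (simp cong: sum.cong)

lemma sum_swap_R:
  assumes "\<forall>i\<in>{1..M}. A i \<subseteq> {1..K}"
  shows "(\<Sum>a\<in>{1..K}. \<Sum>j\<in>Rset M A a. f j a) = (\<Sum>i\<in>{1..M}. \<Sum>a\<in>A i. f i a)"
proof -
  have r: "(\<Sum>j\<in>Rset M A a. f j a) = (\<Sum>j\<in>{1..M}. if a \<in> A j then f j a else 0)" for a
    unfolding Rset_def by (rule sum.inter_filter) simp
  have "(\<Sum>a\<in>{1..K}. \<Sum>j\<in>Rset M A a. f j a) = (\<Sum>a\<in>{1..K}. \<Sum>j\<in>{1..M}. if a \<in> A j then f j a else 0)"
    by (simp only: r)
  also have "\<dots> = (\<Sum>j\<in>{1..M}. \<Sum>a\<in>{1..K}. if a \<in> A j then f j a else 0)" by (rule sum.swap)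
  also have "\<dots> = (\<Sum>j\<in>{1..M}. \<Sum>a\<in>A j. f j a)"
  proof (rule sum.cong[OF refl])
    fix j assume j: "j \<in> {1..M}"
    have "(\<Sum>a\<in>{1..K}. if a \<in> A j then f j a else 0) = (\<Sum>a\<in>{a\<in>{1..K}. a \<in> A j}. f j a)"
      by (rule sum.inter_filter[symmetric]) simp
    also have "{a\<in>{1..K}. a \<in> A j} = A j" using assms j by blast
    finally show "(\<Sum>a\<in>{1..K}. if a \<in> A j then f j a else 0) = (\<Sum>a\<in>A j. f j a)" .
  qed
  finally show ?thesis .
qed

lemma max_ge_avg:
  fixes g w :: "nat \<Rightarrow> real"
  assumes "finite S" "\<And>a. a \<in> S \<Longrightarrow> w a \<ge> 0" "sum w S = 1"
  shows "(\<Sum>a\<in>S. w a * g a) \<le> Max (g ` S)"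
proof -
  have ne: "S \<noteq> {}" using assms(3) by auto
  have "(\<Sum>a\<in>S. w a * g a) \<le> (\<Sum>a\<in>S. w a * Max (g ` S))"
    using assms by (intro sum_mono mult_left_mono) auto
  also have "\<dots> = Max (g ` S)" using assms(3) by (simp add: sum_distrib_right[symmetric])
  finally show ?thesis .
qed




definition gv :: "nat \<Rightarrow> (nat \<Rightarrow> nat set) \<Rightarrow> (nat \<Rightarrow> nat \<Rightarrow> real^'d) \<Rightarrow> (nat \<Rightarrow> nat \<Rightarrow> real) \<Rightarrow> nat \<Rightarrow> nat \<Rightarrow> real" where
  "gv M A e p i a = e i a \<bullet> (mp_pinv (Vmat M A e p a) *v e i a)"

lemma Gobj_gv: "Gobj M A e p = (\<Sum>i\<in>{1..M}. Max ((\<lambda>a. gv M A e p i a) ` A i))"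
  unfolding Gobj_def gv_def ..

lemma Cset_row:
  assumes As: "\<forall>i\<in>{1..M}. A i \<subseteq> {1..K}" and p: "p \<in> Cset M K A e" and i: "i \<in> {1..M}"
  shows "finite (A i)" "\<And>a. a \<in> A i \<Longrightarrow> p i a \<ge> 0" "sum (p i) (A i) = 1"
proof -
  show "finite (A i)" using As i finite_subset by blast
  show "\<And>a. a \<in> A i \<Longrightarrow> p i a \<ge> 0" using p i by (auto simp: Cset_def)
  show "sum (p i) (A i) = 1" using p i by (auto simp: Cset_def)
qed

lemma trace_self:
  assumes g: "good V W" and W: "subspace W"
  shows "trace (mp_pinv V ** V) = real (dim W)"
proof -
  obtain B S where "onb B" "S \<subseteq> B" and P: "isproj (dg B (ind S)) W" using exists_proj[OF g W] by blast
  show ?thesis using good_decomp[OF g W P] by blast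
qed

lemma sumd:
  assumes As: "\<forall>i\<in>{1..M}. A i \<subseteq> {1..K}" and p: "p \<in> Cset M K A e"
  shows "(\<Sum>i\<in>{1..M}. \<Sum>a\<in>A i. p i a * gv M A e p i a) = real (\<Sum>a\<in>{1..K}. dval M A e a)"
proof -
  have "(\<Sum>i\<in>{1..M}. \<Sum>a\<in>A i. p i a * gv M A e p i a) = (\<Sum>a\<in>{1..K}. \<Sum>j\<in>Rset M A a. p j a * gv M A e p j a)"
    by (rule sum_swap_R[OF As, symmetric])
  also have "\<dots> = (\<Sum>a\<in>{1..K}. trace (mp_pinv (Vmat M A e p a) ** Vmat M A e p a))"
    by (simp add: trace_Vmat gv_def)
  also have "\<dots> = (\<Sum>a\<in>{1..K}. real (dval M A e a))"
  proof (rule sum.cong[OF refl])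
    fix a assume a: "a \<in> {1..K}"
    have "trace (mp_pinv (Vmat M A e p a) ** Vmat M A e p a) = real (dim (Wsp M A e a))"
      by (rule trace_self[OF good_Cset[OF p a] subspace_Wsp])
    also have "dim (Wsp M A e a) = dval M A e a" by (simp add: Wsp_def dval_def)
    finally show "trace (mp_pinv (Vmat M A e p a) ** Vmat M A e p a) = real (dval M A e a)" .
  qed
  also have "\<dots> = real (\<Sum>a\<in>{1..K}. dval M A e a)" by simp
  finally show ?thesis .
qed

lemma G_lower:
  assumes As: "\<forall>i\<in>{1..M}. A i \<subseteq> {1..K}" and p: "p \<in> Cset M K A e"
  shows "real (\<Sum>a\<in>{1..K}. dval M A e a) \<le> Gobj M A e p"
proof -
  have "(\<Sum>i\<in>{1..M}. \<Sum>a\<in>A i. p i a * gv M A e p i a) \<le> (\<Sum>i\<in>{1..M}. Max ((\<lambda>a. gv M A e p i a) ` A i))"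
    by (intro sum_mono max_ge_avg Cset_row[OF As p]) auto
  then show ?thesis unfolding Gobj_gv sumd[OF As p] .
qed

lemma trace_diff_Vmat:
  "trace (Q ** (Vmat M A e q a - Vmat M A e p a)) =
     (\<Sum>j\<in>Rset M A a. q j a * (e j a \<bullet> (Q *v e j a))) - (\<Sum>j\<in>Rset M A a. p j a * (e j a \<bullet> (Q *v e j a)))"
  by (simp add: mm_diff_ldistrib trace_sub trace_Vmat)

lemma F_upper:
  assumes As: "\<forall>i\<in>{1..M}. A i \<subseteq> {1..K}" and p: "p \<in> Cset M K A e" and q: "q \<in> Cset M K A e"
  shows "Fobj M K A e q \<le> Fobj M K A e p + (\<Sum>i\<in>{1..M}. \<Sum>a\<in>A i. q i a * gv M A e p i a)
            - real (\<Sum>a\<in>{1..K}. dval M A e a)"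
proof -
  have each: "ln (pdet (Vmat M A e q a)) \<le> ln (pdet (Vmat M A e p a)) +
      ((\<Sum>j\<in>Rset M A a. q j a * gv M A e p j a) - (\<Sum>j\<in>Rset M A a. p j a * gv M A e p j a))"
    if a: "a \<in> {1..K}" for a
  proof -
    obtain B S where "onb B" "S \<subseteq> B" and P: "isproj (dg B (ind S)) (Wsp M A e a)"
      using exists_proj[OF good_Cset[OF p a] subspace_Wsp] by blast
    have "ln (pdet (Vmat M A e q a)) \<le> ln (pdet (Vmat M A e p a)) +
        trace (mp_pinv (Vmat M A e p a) ** (Vmat M A e q a - Vmat M A e p a))"
      by (rule good_conc[OF good_Cset[OF p a] good_Cset[OF q a] subspace_Wsp P])
    then show ?thesis unfolding trace_diff_Vmat gv_def .
  qed
  have "Fobj M K A e q \<le> (\<Sum>a\<in>{1..K}. ln (pdet (Vmat M A e p a)) +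
      ((\<Sum>j\<in>Rset M A a. q j a * gv M A e p j a) - (\<Sum>j\<in>Rset M A a. p j a * gv M A e p j a)))"
    unfolding Fobj_def by (rule sum_mono[OF each])
  also have "\<dots> = Fobj M K A e p + (\<Sum>a\<in>{1..K}. \<Sum>j\<in>Rset M A a. q j a * gv M A e p j a)
       - (\<Sum>a\<in>{1..K}. \<Sum>j\<in>Rset M A a. p j a * gv M A e p j a)"
    unfolding Fobj_def by (simp add: sum.distrib sum_subtractf)
  also have "(\<Sum>a\<in>{1..K}. \<Sum>j\<in>Rset M A a. q j a * gv M A e p j a) = (\<Sum>i\<in>{1..M}. \<Sum>a\<in>A i. q i a * gv M A e p i a)"
    by (rule sum_swap_R[OF As])
  also have "(\<Sum>a\<in>{1..K}. \<Sum>j\<in>Rset M A a. p j a * gv M A e p j a) = real (\<Sum>a\<in>{1..K}. dval M A e a)"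
    using sum_swap_R[OF As, of "\<lambda>j a. p j a * gv M A e p j a"] sumd[OF As p] by simp
  finally show ?thesis .
qed

lemma G_opt_imp_F_opt:
  assumes As: "\<forall>i\<in>{1..M}. A i \<subseteq> {1..K}" and p: "p \<in> Cset M K A e"
    and G: "Gobj M A e p = real (\<Sum>a\<in>{1..K}. dval M A e a)" and q: "q \<in> Cset M K A e"
  shows "Fobj M K A e q \<le> Fobj M K A e p"
proof -
  have "(\<Sum>i\<in>{1..M}. \<Sum>a\<in>A i. q i a * gv M A e p i a) \<le> (\<Sum>i\<in>{1..M}. Max ((\<lambda>a. gv M A e p i a) ` A i))"
    by (intro sum_mono max_ge_avg Cset_row[OF As q]) auto
  then have "(\<Sum>i\<in>{1..M}. \<Sum>a\<in>A i. q i a * gv M A e p i a) \<le> real (\<Sum>a\<in>{1..K}. dval M A e a)"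
    using G unfolding Gobj_gv by simp
  then show ?thesis using F_upper[OF As p q] by linarith
qed




lemma Vmat_lin: "Vmat M A e (\<lambda>j b. p j b + t * r j b) a = Vmat M A e p a + t *\<^sub>R Vmat M A e r a"
  unfolding Vmat_def by (simp add: sum.distrib scaleR_add_left scaleR_sum_right)

lemma step_in_C:
  assumes p: "p \<in> Cset M K A e"
    and qnn: "\<And>j b. j \<in> {1..M} \<Longrightarrow> b \<in> A j \<Longrightarrow> q j b \<ge> 0"
    and qsum: "\<And>j. j \<in> {1..M} \<Longrightarrow> sum (q j) (A j) = 1"
    and t: "0 \<le> t" "t < 1"
  shows "(\<lambda>j b. p j b + t * (q j b - p j b)) \<in> Cset M K A e"
proof -
  define pt where "pt = (\<lambda>j b. p j b + t * (q j b - p j b))"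
  have pnn: "\<And>j b. j \<in> {1..M} \<Longrightarrow> b \<in> A j \<Longrightarrow> p j b \<ge> 0" and psum: "\<And>j. j \<in> {1..M} \<Longrightarrow> sum (p j) (A j) = 1"
    using p by (auto simp: Cset_def)
  have ptf: "pt j b = (1 - t) * p j b + t * q j b" for j b by (simp add: pt_def algebra_simps)
  have ptnn: "pt j b \<ge> 0" if "j \<in> {1..M}" "b \<in> A j" for j b
    unfolding ptf using pnn[OF that] qnn[OF that] t by simp
  have ptge: "pt j b \<ge> (1 - t) * p j b" if "j \<in> {1..M}" "b \<in> A j" for j b
    unfolding ptf using qnn[OF that] t by simp
  have ptsum: "sum (pt j) (A j) = 1" if "j \<in> {1..M}" for j
  proof -
    have "sum (pt j) (A j) = (1 - t) * sum (p j) (A j) + t * sum (q j) (A j)"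
      unfolding ptf by (simp add: sum.distrib sum_distrib_left)
    then show ?thesis using psum[OF that] qsum[OF that] by simp
  qed
  have rank: "dim ((\<lambda>i. pt i a *\<^sub>R e i a) ` Rset M A a) = dim ((\<lambda>i. e i a) ` Rset M A a)"
    if a: "a \<in> {1..K}" for a
  proof -
    have sp: "span ((\<lambda>i. p i a *\<^sub>R e i a) ` Rset M A a) = Wsp M A e a" by (rule Cset_span[OF p a])
    have "span ((\<lambda>i. p i a *\<^sub>R e i a) ` Rset M A a) \<subseteq> span ((\<lambda>i. pt i a *\<^sub>R e i a) ` Rset M A a)"
    proof (rule span_minimal[OF _ subspace_span], clarify)
      fix j assume j: "j \<in> Rset M A a"
      then have jj: "j \<in> {1..M}" "a \<in> A j" by (auto simp: Rset_def)
      show "p j a *\<^sub>R e j a \<in> span ((\<lambda>i. pt i a *\<^sub>R e i a) ` Rset M A a)"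
      proof (cases "p j a = 0")
        case True then show ?thesis by (simp add: span_zero)
      next
        case False
        then have "p j a > 0" using pnn[OF jj] by simp
        then have "(1 - t) * p j a > 0" using t by simp
        then have ptp: "pt j a > 0" using ptge[OF jj] by linarith
        have "p j a *\<^sub>R e j a = (p j a / pt j a) *\<^sub>R (pt j a *\<^sub>R e j a)" using ptp by simp
        also have "\<dots> \<in> span ((\<lambda>i. pt i a *\<^sub>R e i a) ` Rset M A a)"
          using j by (intro span_scale span_base) auto
        finally show ?thesis .
      qed
    qed
    then have "span ((\<lambda>i. pt i a *\<^sub>R e i a) ` Rset M A a) = Wsp M A e a"
      using span_scaled_sub[of pt a e M A] sp by blast
    then have "span ((\<lambda>i. pt i a *\<^sub>R e i a) ` Rset M A a) = span ((\<lambda>i. e i a) ` Rset M A a)"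
      by (simp add: Wsp_def)
    from arg_cong[OF this, of dim] show ?thesis by simp
  qed
  have "pt \<in> Cset M K A e" unfolding Cset_def using ptnn ptsum rank by blast
  then show ?thesis by (simp add: pt_def)
qed

lemma F_opt_imp_G:
  assumes As: "\<forall>i\<in>{1..M}. A i \<subseteq> {1..K}" and p: "p \<in> Cset M K A e"
    and Fmax: "\<forall>q\<in>Cset M K A e. Fobj M K A e q \<le> Fobj M K A e p"
  shows "Gobj M A e p = real (\<Sum>a\<in>{1..K}. dval M A e a)"
proof (rule ccontr)
  assume ne: "Gobj M A e p \<noteq> real (\<Sum>a\<in>{1..K}. dval M A e a)"
  define g where "g = gv M A e p"
  have "real (\<Sum>a\<in>{1..K}. dval M A e a) < Gobj M A e p" using G_lower[OF As p] ne by simp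
  then have lt: "(\<Sum>i\<in>{1..M}. \<Sum>a\<in>A i. p i a * g i a) < (\<Sum>i\<in>{1..M}. Max ((\<lambda>a. g i a) ` A i))"
    using sumd[OF As p] unfolding Gobj_gv g_def by simp
  have "\<exists>i\<in>{1..M}. (\<Sum>a\<in>A i. p i a * g i a) < Max ((\<lambda>a. g i a) ` A i)"
  proof (rule ccontr)
    assume "\<not> ?thesis"
    then have "\<forall>i\<in>{1..M}. Max ((\<lambda>a. g i a) ` A i) \<le> (\<Sum>a\<in>A i. p i a * g i a)" by (simp add: not_less)
    then have "(\<Sum>i\<in>{1..M}. Max ((\<lambda>a. g i a) ` A i)) \<le> (\<Sum>i\<in>{1..M}. \<Sum>a\<in>A i. p i a * g i a)"
      by (intro sum_mono) auto
    with lt show False by simp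
  qed
  then obtain i where i: "i \<in> {1..M}" and ilt: "(\<Sum>a\<in>A i. p i a * g i a) < Max ((\<lambda>a. g i a) ` A i)"
    by blast
  have finA: "finite (A i)" and pnn: "\<And>a. a \<in> A i \<Longrightarrow> p i a \<ge> 0" and psum: "sum (p i) (A i) = 1"
    using Cset_row[OF As p i] by auto
  have neA: "A i \<noteq> {}" using psum by auto
  have "Max ((\<lambda>a. g i a) ` A i) \<in> (\<lambda>a. g i a) ` A i" using finA neA by (intro Max_in) auto
  then obtain a0 where a0: "a0 \<in> A i" and ga0: "g i a0 = Max ((\<lambda>a. g i a) ` A i)" by force
  define s where "s = g i a0 - (\<Sum>a\<in>A i. p i a * g i a)"
  have spos: "s > 0" unfolding s_def using ilt ga0 by simp
  define q where "q = (\<lambda>j b. if j = i then (if b = a0 then 1 else 0) else p j b)"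
  have qnn: "q j b \<ge> 0" if "j \<in> {1..M}" "b \<in> A j" for j b
    using that p by (auto simp: q_def Cset_def)
  have qsum: "sum (q j) (A j) = 1" if "j \<in> {1..M}" for j
  proof (cases "j = i")
    case True
    have "sum (q j) (A j) = (\<Sum>b\<in>A i. if b = a0 then 1 else 0)" using True by (simp add: q_def)
    also have "\<dots> = 1" using finA a0 by simp
    finally show ?thesis .
  next
    case False then show ?thesis using that p by (simp add: q_def Cset_def)
  qed
  define r where "r = (\<lambda>j b. q j b - p j b)"
  define pt where "pt t = (\<lambda>j b. p j b + t * r j b)" for t
  have ptC: "pt t \<in> Cset M K A e" if "0 \<le> t" "t < 1" for t
    using step_in_C[OF p qnn qsum that] unfolding pt_def r_def by simp
  have Vpt: "Vmat M A e (pt t) a = Vmat M A e p a + t *\<^sub>R Vmat M A e r a" for t a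
    unfolding pt_def by (rule Vmat_lin)
  have per: "\<forall>a\<in>{1..K}. \<exists>c t0. t0 > 0 \<and> (\<forall>t. 0 < t \<and> t \<le> t0 \<and> t < 1 \<longrightarrow>
      ln (pdet (Vmat M A e p a)) + t * trace (mp_pinv (Vmat M A e p a) ** Vmat M A e r a) - c * t\<^sup>2
        \<le> ln (pdet (Vmat M A e (pt t) a)))"
  proof
    fix a assume a: "a \<in> {1..K}"
    obtain B S where "onb B" "S \<subseteq> B" and P: "isproj (dg B (ind S)) (Wsp M A e a)"
      using exists_proj[OF good_Cset[OF p a] subspace_Wsp] by blast
    obtain c t0 where t0: "t0 > 0" and main: "\<forall>t. 0 < t \<and> t \<le> t0 \<longrightarrow>
        ln (pdet (Vmat M A e p a)) + t * trace (mp_pinv (Vmat M A e p a) ** Vmat M A e r a) - c * t\<^sup>2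
          \<le> ln (det ((Vmat M A e p a + t *\<^sub>R Vmat M A e r a) + mat 1 - dg B (ind S)))"
      using good_deriv[OF good_Cset[OF p a] subspace_Wsp P Vmat_sym Vmat_into] by blast
    have pe: "pdet (Vmat M A e (pt t) a) = det ((Vmat M A e p a + t *\<^sub>R Vmat M A e r a) + mat 1 - dg B (ind S))"
      if "0 < t" "t < 1" for t
      using good_pdet_pos(1)[OF good_Cset[OF ptC[of t] a] subspace_Wsp P] that unfolding Vpt by simp
    have "\<forall>t. 0 < t \<and> t \<le> t0 \<and> t < 1 \<longrightarrow>
      ln (pdet (Vmat M A e p a)) + t * trace (mp_pinv (Vmat M A e p a) ** Vmat M A e r a) - c * t\<^sup>2
        \<le> ln (pdet (Vmat M A e (pt t) a))"
    proof (intro allI impI)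
      fix t assume t: "0 < t \<and> t \<le> t0 \<and> t < 1"
      then show "ln (pdet (Vmat M A e p a)) + t * trace (mp_pinv (Vmat M A e p a) ** Vmat M A e r a) - c * t\<^sup>2
        \<le> ln (pdet (Vmat M A e (pt t) a))" using main pe[of t] by simp
    qed
    then show "\<exists>c t0. t0 > 0 \<and> (\<forall>t. 0 < t \<and> t \<le> t0 \<and> t < 1 \<longrightarrow>
      ln (pdet (Vmat M A e p a)) + t * trace (mp_pinv (Vmat M A e p a) ** Vmat M A e r a) - c * t\<^sup>2
        \<le> ln (pdet (Vmat M A e (pt t) a)))" using t0 by blast
  qed
  obtain cf where cf: "\<forall>a\<in>{1..K}. \<exists>t0. t0 > 0 \<and> (\<forall>t. 0 < t \<and> t \<le> t0 \<and> t < 1 \<longrightarrow>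
      ln (pdet (Vmat M A e p a)) + t * trace (mp_pinv (Vmat M A e p a) ** Vmat M A e r a) - cf a * t\<^sup>2
        \<le> ln (pdet (Vmat M A e (pt t) a)))"
    using bchoice[OF per] by blast
  obtain tf where tf: "\<forall>a\<in>{1..K}. tf a > 0 \<and> (\<forall>t. 0 < t \<and> t \<le> tf a \<and> t < 1 \<longrightarrow>
      ln (pdet (Vmat M A e p a)) + t * trace (mp_pinv (Vmat M A e p a) ** Vmat M A e r a) - cf a * t\<^sup>2
        \<le> ln (pdet (Vmat M A e (pt t) a)))"
    using bchoice[OF cf] by blast
  define C where "C = (\<Sum>a\<in>{1..K}. cf a)"
  define T0 where "T0 = Min (insert (1/2) (tf ` {1..K}))"
  have T0pos: "T0 > 0" unfolding T0_def using tf by (subst Min_gr_iff) auto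
  have T0le: "T0 \<le> tf a" if "a \<in> {1..K}" for a unfolding T0_def using that by (intro Min_le) auto
  have T0h: "T0 \<le> 1/2" unfolding T0_def by (intro Min_le) auto
  define t where "t = min T0 (s / (2 * (\<bar>C\<bar> + 1)))"
  have tpos: "t > 0" unfolding t_def using T0pos spos by (simp add: add_pos_nonneg)
  have tlt1: "t < 1" using T0h by (simp add: t_def)
  have tle: "t \<le> tf a" if "a \<in> {1..K}" for a using T0le[OF that] by (simp add: t_def)
  have tC: "t * \<bar>C\<bar> \<le> s / 2"
  proof -
    have "t \<le> s / (2 * (\<bar>C\<bar> + 1))" by (simp add: t_def)
    then have "t * (2 * (\<bar>C\<bar> + 1)) \<le> s" by (simp add: pos_le_divide_eq add_pos_nonneg)
    then show ?thesis using tpos by (simp add: algebra_simps)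
  qed
  have trsum: "(\<Sum>a\<in>{1..K}. trace (mp_pinv (Vmat M A e p a) ** Vmat M A e r a)) = s"
  proof -
    have "(\<Sum>a\<in>{1..K}. trace (mp_pinv (Vmat M A e p a) ** Vmat M A e r a)) =
        (\<Sum>a\<in>{1..K}. \<Sum>j\<in>Rset M A a. r j a * g j a)"
      by (simp add: trace_Vmat g_def gv_def)
    also have "\<dots> = (\<Sum>j\<in>{1..M}. \<Sum>b\<in>A j. r j b * g j b)" by (rule sum_swap_R[OF As])
    also have "\<dots> = (\<Sum>j\<in>{1..M}. if j = i then (\<Sum>b\<in>A i. r i b * g i b) else 0)"
      by (rule sum.cong) (auto simp: r_def q_def)
    also have "\<dots> = (\<Sum>b\<in>A i. r i b * g i b)" using i by simp
    also have "\<dots> = (\<Sum>b\<in>A i. (if b = a0 then g i b else 0)) - (\<Sum>b\<in>A i. p i b * g i b)"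
      by (simp add: r_def q_def left_diff_distrib sum_subtractf if_distrib[of "\<lambda>x. x * _"] cong: if_cong)
    also have "\<dots> = s" using finA a0 by (simp add: s_def)
    finally show ?thesis .
  qed
  have "Fobj M K A e p + t * s - C * t\<^sup>2 = (\<Sum>a\<in>{1..K}.
      ln (pdet (Vmat M A e p a)) + t * trace (mp_pinv (Vmat M A e p a) ** Vmat M A e r a) - cf a * t\<^sup>2)"
    unfolding Fobj_def C_def trsum[symmetric]
    by (simp add: sum.distrib sum_subtractf sum_distrib_left sum_distrib_right)
  also have "\<dots> \<le> (\<Sum>a\<in>{1..K}. ln (pdet (Vmat M A e (pt t) a)))"
    using tf tle tpos tlt1 by (intro sum_mono) auto
  also have "\<dots> = Fobj M K A e (pt t)" by (simp add: Fobj_def)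
  finally have Fge: "Fobj M K A e p + t * s - C * t\<^sup>2 \<le> Fobj M K A e (pt t)" .
  have "C * t\<^sup>2 \<le> \<bar>C\<bar> * t\<^sup>2" by (simp add: mult_right_mono)
  also have "\<dots> = t * (t * \<bar>C\<bar>)" by (simp add: power2_eq_square mult_ac)
  also have "\<dots> \<le> t * (s / 2)" using tC tpos by (simp add: mult_left_mono)
  also have "\<dots> < t * s" using tpos spos by simp
  finally have "Fobj M K A e p < Fobj M K A e (pt t)" using Fge by linarith
  moreover have "Fobj M K A e (pt t) \<le> Fobj M K A e p" using Fmax ptC[of t] tpos tlt1 by simp
  ultimately show False by simp
qed




lemma compact_PiE_UNIV:
  assumes "\<And>i. compact (S i)"
  shows "compact (PiE UNIV S :: ('a \<Rightarrow> 'b::topological_space) set)"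
proof -
  have "compactin (product_topology (\<lambda>i. euclidean) UNIV) (PiE UNIV S)"
    using assms by (subst compactin_PiE) auto
  then show ?thesis by (simp add: euclidean_product_topology)
qed

lemma cont_coord: "continuous_on S (\<lambda>p::nat \<Rightarrow> nat \<Rightarrow> real. p i a)"
proof -
  have "continuous_on UNIV (\<lambda>p::nat \<Rightarrow> nat \<Rightarrow> real. p i)" by (rule continuous_on_product_coordinates)
  then have "continuous_on UNIV (\<lambda>p::nat \<Rightarrow> nat \<Rightarrow> real. p i a)"
    by (rule continuous_on_product_then_coordinatewise)
  then show ?thesis by (rule continuous_on_subset) simp
qed

lemma cont_det:
  fixes F :: "'a::topological_space \<Rightarrow> real^'n^'n"
  assumes "\<And>i j. continuous_on S (\<lambda>x. F x $ i $ j)"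
  shows "continuous_on S (\<lambda>x. det (F x))"
  unfolding det_def by (intro continuous_intros assms)

lemma cont_Vmat_entry: "continuous_on S (\<lambda>p. (Vmat M A e p a + C) $ i $ j)"
  by (simp add: Vmat_entry) (intro continuous_intros cont_coord)

lemma dg_quad: "onb B \<Longrightarrow> x \<bullet> (dg B f *v x) = (\<Sum>b\<in>B. f b * (b \<bullet> x)\<^sup>2)"
  unfolding dg_vec by (simp add: inner_sum_right power2_eq_square inner_commute mult_ac)

lemma detN_nonneg:
  assumes B: "onb B" and nn: "\<And>j. j \<in> Rset M A a \<Longrightarrow> p j a \<ge> 0"
  shows "det (Vmat M A e p a + mat 1 - dg B (ind S)) \<ge> 0"
proof (rule psd_det)
  have IP: "mat 1 - dg B (ind S) = dg B (\<lambda>b. 1 - ind S b)"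
    unfolding dg_one[OF B, symmetric] dg_diff ..
  have eq: "Vmat M A e p a + mat 1 - dg B (ind S) = Vmat M A e p a + dg B (\<lambda>b. 1 - ind S b)"
    unfolding IP[symmetric] by simp
  show "transpose (Vmat M A e p a + mat 1 - dg B (ind S)) = Vmat M A e p a + mat 1 - dg B (ind S)"
    unfolding eq by (simp add: transpose_def vec_eq_iff Vmat_sym[unfolded transpose_def vec_eq_iff, simplified]
        dg_entry mult_ac)
  fix y
  have "y \<bullet> (dg B (\<lambda>b. 1 - ind S b) *v y) \<ge> 0"
    unfolding dg_quad[OF B] by (intro sum_nonneg) (simp add: ind_def)
  moreover have "y \<bullet> (Vmat M A e p a *v y) \<ge> 0" by (rule Vmat_psd) (rule nn)
  ultimately show "y \<bullet> ((Vmat M A e p a + mat 1 - dg B (ind S)) *v y) \<ge> 0"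
    unfolding eq by (simp add: matrix_vector_mult_add_rdistrib inner_add_right)
qed

lemma detnz_span:
  fixes V P :: "real^'n^'n"
  assumes W: "subspace W" and P: "isproj P W" and nz: "det (V + mat 1 - P) \<noteq> 0"
    and VU: "\<And>x. V *v x \<in> U" and UW: "U \<subseteq> W"
  shows "W \<subseteq> U"
proof
  fix w assume w: "w \<in> W"
  have "invertible (V + mat 1 - P)" using nz by (simp add: invertible_det_nz)
  then obtain N' where N': "(V + mat 1 - P) ** N' = mat 1" by (auto simp: invertible_def)
  define x where "x = N' *v w"
  have Nx: "(V + mat 1 - P) *v x = w" unfolding x_def by (simp add: matrix_vector_mul_assoc N')
  then have wx: "w = V *v x + (x - P *v x)"
    by (simp add: matrix_vector_mult_add_rdistrib matrix_vector_mult_diff_rdistrib algebra_simps)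
  have "x - P *v x = w - V *v x" using wx by simp
  also have "\<dots> \<in> W" using w VU UW W by (meson subsetD subspace_diff)
  finally have xW: "x - P *v x \<in> W" .
  have "(x - P *v x) \<bullet> (x - P *v x) = 0" using P xW by (simp add: isproj_def)
  then have "x - P *v x = 0" by simp
  then have "w = V *v x" using wx by simp
  then show "w \<in> U" using VU by simp
qed

lemma exists_max:
  assumes As: "\<forall>i\<in>{1..M}. A i \<subseteq> {1..K}" and ps: "ps \<in> Cset M K A e"
  shows "\<exists>p\<in>Cset M K A e. \<forall>q\<in>Cset M K A e. Fobj M K A e q \<le> Fobj M K A e p"
proof -
  have "\<forall>a\<in>{1..K}. \<exists>B S. onb B \<and> S \<subseteq> B \<and> isproj (dg B (ind S)) (Wsp M A e a)"
    using exists_proj[OF good_Cset[OF ps] subspace_Wsp] by blast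
  then obtain Bf where "\<forall>a\<in>{1..K}. \<exists>S. onb (Bf a) \<and> S \<subseteq> Bf a \<and> isproj (dg (Bf a) (ind S)) (Wsp M A e a)"
    using bchoice by metis
  then obtain Sf where BS: "\<forall>a\<in>{1..K}. onb (Bf a) \<and> Sf a \<subseteq> Bf a \<and> isproj (dg (Bf a) (ind (Sf a))) (Wsp M A e a)"
    using bchoice by metis
  define Pf where "Pf a = dg (Bf a) (ind (Sf a))" for a
  have Bon: "onb (Bf a)" and Pp: "isproj (Pf a) (Wsp M A e a)" if "a \<in> {1..K}" for a
    using BS that by (auto simp: Pf_def)
  define Phi where "Phi p = (\<Prod>a\<in>{1..K}. det (Vmat M A e p a + mat 1 - Pf a))" for p
  have PhiC: "Phi p > 0 \<and> Fobj M K A e p = ln (Phi p)" if p: "p \<in> Cset M K A e" for p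
  proof -
    have eqa: "pdet (Vmat M A e p a) = det (Vmat M A e p a + mat 1 - Pf a)"
      and posa: "pdet (Vmat M A e p a) > 0" if a: "a \<in> {1..K}" for a
      using good_pdet_pos[OF good_Cset[OF p a] subspace_Wsp Pp[OF a]] by auto
    have "Phi p = (\<Prod>a\<in>{1..K}. pdet (Vmat M A e p a))" unfolding Phi_def using eqa by simp
    moreover have "(\<Prod>a\<in>{1..K}. pdet (Vmat M A e p a)) > 0" using posa by (intro prod_pos) auto
    moreover have "ln (\<Prod>a\<in>{1..K}. pdet (Vmat M A e p a)) = Fobj M K A e p"
      unfolding Fobj_def using posa by (subst ln_prod) (auto simp: less_imp_neq[symmetric])
    ultimately show ?thesis by simp
  qed
  define cl where "cl p = (\<lambda>i a. if i \<in> {1..M} \<and> a \<in> A i then p i a else 0)" for p :: "nat \<Rightarrow> nat \<Rightarrow> real"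
  have Vcl: "Vmat M A e (cl p) a = Vmat M A e p a" for p a
    by (rule Vmat_cong) (auto simp: cl_def Rset_def)
  have Phicl: "Phi (cl p) = Phi p" for p unfolding Phi_def Vcl ..
  define Dl where "Dl = {p::nat \<Rightarrow> nat \<Rightarrow> real. (\<forall>i a. 0 \<le> p i a \<and> p i a \<le> 1) \<and> (\<forall>i\<in>{1..M}. sum (p i) (A i) = 1)}"
  have clD: "cl p \<in> Dl" if p: "p \<in> Cset M K A e" for p
  proof -
    have "0 \<le> cl p i a \<and> cl p i a \<le> 1" for i a
    proof (cases "i \<in> {1..M} \<and> a \<in> A i")
      case True
      then have i: "i \<in> {1..M}" and a: "a \<in> A i" by auto
      have "p i a \<le> sum (p i) (A i)"
        using Cset_row[OF As p i] a by (intro member_le_sum) auto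
      then show ?thesis using Cset_row[OF As p i] a True by (simp add: cl_def)
    next
      case False then show ?thesis unfolding cl_def by auto
    qed
    moreover have "sum (cl p i) (A i) = 1" if i: "i \<in> {1..M}" for i
      using Cset_row(3)[OF As p i] i by (simp add: cl_def cong: sum.cong)
    ultimately show ?thesis by (simp add: Dl_def)
  qed
  have Dne: "Dl \<noteq> {}" using clD[OF ps] by blast
  have Dbox: "Dl = (PiE UNIV (\<lambda>_. PiE UNIV (\<lambda>_. {0..1::real}))) \<inter> (\<Inter>i\<in>{1..M}. {p. sum (p i) (A i) = 1})"
    unfolding Dl_def by (auto simp: PiE_UNIV_domain Pi_iff)
  have "closed {p::nat \<Rightarrow> nat \<Rightarrow> real. sum (p i) (A i) = 1}" for i
    by (rule closed_Collect_eq) (intro continuous_intros cont_coord)+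
  then have cD: "compact Dl" unfolding Dbox
    by (intro compact_Int_closed compact_PiE_UNIV closed_INT) auto
  have contPhi: "continuous_on Dl Phi" unfolding Phi_def add_diff_eq[symmetric]
    by (intro continuous_on_prod cont_det cont_Vmat_entry)
  obtain ps' where ps'D: "ps' \<in> Dl" and ps'max: "\<And>y. y \<in> Dl \<Longrightarrow> Phi y \<le> Phi ps'"
    using continuous_attains_sup[OF cD Dne contPhi] by blast
  have "Phi ps' \<ge> Phi (cl ps)" using ps'max[OF clD[OF ps]] .
  then have Php: "Phi ps' > 0" using PhiC[OF ps] Phicl by simp
  have nnD: "\<And>j. j \<in> Rset M A a \<Longrightarrow> ps' j a \<ge> 0" for a using ps'D by (auto simp: Dl_def)
  have nz: "det (Vmat M A e ps' a + mat 1 - Pf a) \<noteq> 0" if a: "a \<in> {1..K}" for a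
  proof
    assume "det (Vmat M A e ps' a + mat 1 - Pf a) = 0"
    then have "Phi ps' = 0" unfolding Phi_def using a by (intro prod_zero) auto
    with Php show False by simp
  qed
  have ps'C: "ps' \<in> Cset M K A e"
  proof -
    have rank: "dim ((\<lambda>i. ps' i a *\<^sub>R e i a) ` Rset M A a) = dim ((\<lambda>i. e i a) ` Rset M A a)"
      if a: "a \<in> {1..K}" for a
    proof -
      have "Wsp M A e a \<subseteq> span ((\<lambda>i. ps' i a *\<^sub>R e i a) ` Rset M A a)"
        by (rule detnz_span[OF subspace_Wsp Pp[OF a] nz[OF a]]) (rule Vmat_into_span, rule span_scaled_sub)
      then have "span ((\<lambda>i. ps' i a *\<^sub>R e i a) ` Rset M A a) = span ((\<lambda>i. e i a) ` Rset M A a)"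
        using span_scaled_sub[of ps' a e M A] unfolding Wsp_def by blast
      from arg_cong[OF this, of dim] show ?thesis by simp
    qed
    show ?thesis unfolding Cset_def using ps'D rank by (auto simp: Dl_def)
  qed
  show ?thesis
  proof (intro bexI[OF _ ps'C] ballI)
    fix q assume q: "q \<in> Cset M K A e"
    have "Phi q \<le> Phi ps'" using ps'max[OF clD[OF q]] Phicl by simp
    then show "Fobj M K A e q \<le> Fobj M K A e ps'" using PhiC[OF q] PhiC[OF ps'C] by simp
  qed
qed

theorem lemma6:
  fixes M K :: nat and A :: "nat \<Rightarrow> nat set" and e :: "nat \<Rightarrow> nat \<Rightarrow> real^'d"
    and \<pi>s :: "nat \<Rightarrow> nat \<Rightarrow> real"
  assumes "\<forall>i\<in>{1..M}. A i \<subseteq> {1..K}"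
    and "\<forall>i\<in>{1..M}. \<forall>a\<in>A i. norm (e i a) = 1"
    and "\<pi>s \<in> Cset M K A e"
  shows "((\<forall>\<pi>\<in>Cset M K A e. Fobj M K A e \<pi> \<le> Fobj M K A e \<pi>s)
            \<longleftrightarrow> (\<forall>\<pi>\<in>Cset M K A e. Gobj M A e \<pi>s \<le> Gobj M A e \<pi>)) \<and>
         ((\<forall>\<pi>\<in>Cset M K A e. Gobj M A e \<pi>s \<le> Gobj M A e \<pi>)
            \<longleftrightarrow> Gobj M A e \<pi>s = real (\<Sum>a\<in>{1..K}. dval M A e a))"
proof -
  note As = assms(1) and ps = assms(3)
  define d where "d = real (\<Sum>a\<in>{1..K}. dval M A e a)"
  have F_G: "Gobj M A e p = d" if "p \<in> Cset M K A e" "\<forall>q\<in>Cset M K A e. Fobj M K A e q \<le> Fobj M K A e p" for p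
    using F_opt_imp_G[OF As that] by (simp add: d_def)
  have G_F: "\<forall>q\<in>Cset M K A e. Fobj M K A e q \<le> Fobj M K A e p" if "p \<in> Cset M K A e" "Gobj M A e p = d" for p
    using G_opt_imp_F_opt[OF As that(1)] that(2) by (simp add: d_def)
  have Gl: "d \<le> Gobj M A e p" if "p \<in> Cset M K A e" for p using G_lower[OF As that] by (simp add: d_def)
  obtain pm where pm: "pm \<in> Cset M K A e" "\<forall>q\<in>Cset M K A e. Fobj M K A e q \<le> Fobj M K A e pm"
    using exists_max[OF As ps] by blast
  have Gpm: "Gobj M A e pm = d" by (rule F_G[OF pm])
  have c23: "(\<forall>\<pi>\<in>Cset M K A e. Gobj M A e \<pi>s \<le> Gobj M A e \<pi>) \<longleftrightarrow> Gobj M A e \<pi>s = d"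
  proof
    assume "\<forall>\<pi>\<in>Cset M K A e. Gobj M A e \<pi>s \<le> Gobj M A e \<pi>"
    then have "Gobj M A e \<pi>s \<le> d" using pm(1) Gpm by force
    then show "Gobj M A e \<pi>s = d" using Gl[OF ps] by simp
  next
    assume "Gobj M A e \<pi>s = d"
    then show "\<forall>\<pi>\<in>Cset M K A e. Gobj M A e \<pi>s \<le> Gobj M A e \<pi>" using Gl by simp
  qed
  have c13: "(\<forall>\<pi>\<in>Cset M K A e. Fobj M K A e \<pi> \<le> Fobj M K A e \<pi>s) \<longleftrightarrow> Gobj M A e \<pi>s = d"
    using F_G[OF ps] G_F[OF ps] by blast
  show ?thesis using c23 c13 unfolding d_def by blast
qed


end
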